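(* Let $u$ be a smooth solution of $\sigma_2(D^2u)=1$ with $\Delta u>0$ on an open set in $\mathbb{R}^n$, and let $b=\ln\Delta u$. Define the linearized operator coefficients $(F_{ij})=\Delta u\,I-D^2u$ (a positive definite matrix), $\Delta_F b:=\sum_{i,j}F_{ij}\partial_{ij}b$ and $|\nabla_F b|^2:=\sum_{i,j}F_{ij}b_ib_j$. Let $\lambda_{\min}$ denote the smallest eigenvalue of $D^2u$. (i) If $n=4$, then at every point $$\Delta_Fb\ge \varepsilon\,|\nabla_F b|^2,\qquad \varepsilon=\frac{2}{9}\Big(\frac12+\frac{\lambda_{\min}}{\Delta u}\Big)>0.$$ (ii) If $n\ge5$, then at every point where $$\frac{\lambda_{\min}}{\Delta u}\ge -\frac{\sqrt{3n^2+1}-(n-1)}{2n},$$ one has $\Delta_F b\ge\varepsilon|\nabla_F b|^2$ with $$\varepsilon=\frac{\sqrt{3n^2+1}-(n+1)}{3(n-1)}\Big(\frac{\sqrt{3n^2+1}-(n-1)}{2n}+\frac{\lambda_{\min}}{\Delta u}\Big).$$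
   Context: $\sigma_2(D^2u)$ is the second elementary symmetric function of the eigenvalues of $D^2u$. For a solution with $\Delta u>0$ one has $\Delta u=\sqrt{2\sigma_2(D^2u)+|D^2u|^2}$, and $F_{ij}=\partial\sigma_2(D^2u)/\partial u_{ij}$ equals $\Delta u\,\delta_{ij}-u_{ij}$. *)

theory Defs
  imports "HOL-Analysis.Analysis"
begin

definition pderiv :: "'n::finite \<Rightarrow> (real^'n \<Rightarrow> real) \<Rightarrow> real^'n \<Rightarrow> real" where
  "pderiv i f = (\<lambda>x. frechet_derivative f (at x) (axis i 1))"

fun iter_pderiv :: "'n::finite list \<Rightarrow> (real^'n \<Rightarrow> real) \<Rightarrow> real^'n \<Rightarrow> real" where
  "iter_pderiv [] f = f"
| "iter_pderiv (i # is) f = pderiv i (iter_pderiv is f)"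

definition smooth_on :: "(real^'n::finite) set \<Rightarrow> (real^'n \<Rightarrow> real) \<Rightarrow> bool" where
  "smooth_on S f \<longleftrightarrow> (\<forall>is. iter_pderiv is f differentiable_on S)"

definition hessian :: "(real^'n::finite \<Rightarrow> real) \<Rightarrow> real^'n \<Rightarrow> real^'n^'n" where
  "hessian f x = (\<chi> i j. pderiv i (pderiv j f) x)"

definition laplacian :: "(real^'n::finite \<Rightarrow> real) \<Rightarrow> real^'n \<Rightarrow> real" where
  "laplacian f x = (\<Sum>i\<in>UNIV. pderiv i (pderiv i f) x)"

text \<open>Second elementary symmetric function of the eigenvalues, written as the
  sum of the principal 2x2 minors (the coefficient of the characteristic polynomial).\<close>
definition sigma2 :: "real^'n::finite^'n \<Rightarrow> real" where
  "sigma2 A = (1/2) * (\<Sum>i\<in>UNIV. \<Sum>j\<in>UNIV. A$i$i * A$j$j - A$i$j * A$j$i)"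

definition is_eigenvalue :: "real^'n::finite^'n \<Rightarrow> real \<Rightarrow> bool" where
  "is_eigenvalue A l \<longleftrightarrow> (\<exists>v. v \<noteq> 0 \<and> A *v v = l *\<^sub>R v)"

definition lambda_min :: "real^'n::finite^'n \<Rightarrow> real" where
  "lambda_min A = Min {l. is_eigenvalue A l}"

end

theory Submission
  imports Defs "HOL-Analysis.Analysis"
begin


lemma iter_pderiv_append: "iter_pderiv (xs @ ys) f = iter_pderiv xs (iter_pderiv ys f)"
  by (induction xs) auto

lemma smooth_on_iter: "smooth_on S f \<Longrightarrow> smooth_on S (iter_pderiv ys f)"
  unfolding smooth_on_def by (metis iter_pderiv_append)

lemma smooth_diff_at: "open S \<Longrightarrow> smooth_on S f \<Longrightarrow> y \<in> S \<Longrightarrow> iter_pderiv xs f differentiable (at y)"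
  unfolding smooth_on_def using differentiable_on_eq_differentiable_at by blast

lemma smooth_diff_at0: "open S \<Longrightarrow> smooth_on S f \<Longrightarrow> y \<in> S \<Longrightarrow> f differentiable (at y)"
  using smooth_diff_at[of S f y "[]"] by simp

lemma smooth_pderiv: "smooth_on S f \<Longrightarrow> smooth_on S (pderiv i f)"
  using smooth_on_iter[of S f "[i]"] by simp

lemma pderiv_has: "(f has_derivative f') (at x) \<Longrightarrow> pderiv i f x = f' (axis i 1)"
  unfolding pderiv_def using frechet_derivative_at by metis

lemma pderiv_cong:
  assumes S: "open S" and x: "x \<in> S" and fg: "\<And>y. y \<in> S \<Longrightarrow> f y = g y"
  shows "pderiv i f x = pderiv i g x"
proof -
  have gf: "\<And>y. y \<in> S \<Longrightarrow> g y = f y" using fg by simp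
  have "(f has_derivative f') (at x) \<longleftrightarrow> (g has_derivative f') (at x)" for f'
    using has_derivative_transform_within_open[of f f' x UNIV S g, OF _ S x fg]
      has_derivative_transform_within_open[of g f' x UNIV S f, OF _ S x gf] by blast
  then have "(\<lambda>f'. (f has_derivative f') (at x)) = (\<lambda>f'. (g has_derivative f') (at x))"
    by (rule ext)
  then show ?thesis unfolding pderiv_def frechet_derivative_def by simp
qed

lemma iter_cong:
  assumes "open S" "\<And>y. y \<in> S \<Longrightarrow> f y = g y"
  shows "y \<in> S \<Longrightarrow> iter_pderiv xs f y = iter_pderiv xs g y"
proof (induction xs arbitrary: y)
  case Nil then show ?case using assms by simp
next
  case (Cons a xs)
  have "pderiv a (iter_pderiv xs f) y = pderiv a (iter_pderiv xs g) y"
    by (rule pderiv_cong[OF assms(1) Cons.prems Cons.IH])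
  then show ?case by simp
qed

lemma dir_deriv:
  fixes f :: "real^'n \<Rightarrow> real"
  assumes "f differentiable (at (p + s *\<^sub>R axis i 1))"
  shows "((\<lambda>t. f (p + t *\<^sub>R axis i 1)) has_real_derivative pderiv i f (p + s *\<^sub>R axis i 1)) (at s)"
proof -
  let ?y = "p + s *\<^sub>R axis i 1"
  let ?f' = "frechet_derivative f (at ?y)"
  have fd: "(f has_derivative ?f') (at ?y)" using assms frechet_derivative_works by blast
  have ld: "((\<lambda>t. p + t *\<^sub>R axis i 1) has_derivative (\<lambda>h. h *\<^sub>R axis i 1)) (at s)"
    by (auto intro!: derivative_eq_intros)
  have c: "((\<lambda>t. f (p + t *\<^sub>R axis i 1)) has_derivative (\<lambda>h. ?f' (h *\<^sub>R axis i 1))) (at s)"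
    using has_derivative_compose[OF ld fd] by simp
  have lin: "linear ?f'" using fd has_derivative_linear by blast
  have "(\<lambda>h. ?f' (h *\<^sub>R axis i 1)) = (*) (pderiv i f ?y)"
    using linear_scale[OF lin] by (auto simp: fun_eq_iff pderiv_def)
  then show ?thesis using c by (simp add: has_field_derivative_def)
qed

lemma in_ball_pts:
  fixes x :: "real^'n"
  assumes "ball x r \<subseteq> S" "\<bar>a\<bar> \<le> h" "\<bar>b\<bar> \<le> h" "2*h < r"
  shows "x + a *\<^sub>R axis i 1 + b *\<^sub>R axis j 1 \<in> S"
proof -
  have "norm (a *\<^sub>R (axis i 1::real^'n) + b *\<^sub>R (axis j 1::real^'n)) \<le> norm (a *\<^sub>R (axis i 1::real^'n)) + norm (b *\<^sub>R (axis j 1::real^'n))"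
    by (rule norm_triangle_ineq)
  also have "\<dots> = \<bar>a\<bar> + \<bar>b\<bar>" by simp
  finally have "norm (a *\<^sub>R (axis i 1::real^'n) + b *\<^sub>R (axis j 1::real^'n)) < r" using assms by linarith
  moreover have "dist x (x + (a *\<^sub>R (axis i 1::real^'n) + b *\<^sub>R (axis j 1::real^'n))) = norm (a *\<^sub>R (axis i 1::real^'n) + b *\<^sub>R (axis j 1::real^'n))"
    by (metis dist_commute dist_norm add_diff_cancel_left')
  ultimately have "x + a *\<^sub>R axis i 1 + b *\<^sub>R axis j 1 \<in> ball x r"
    by (simp add: add.assoc)
  then show ?thesis using assms by blast
qed

lemma mixed_mvt:
  fixes g :: "real^'n \<Rightarrow> real"
  assumes S: "open S" and sm: "smooth_on S g" and bx: "ball x r \<subseteq> S" and h: "0 < h" "2*h < r"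
  shows "\<exists>a b. \<bar>a\<bar> \<le> h \<and> \<bar>b\<bar> \<le> h \<and>
    g (x + h *\<^sub>R axis i 1 + h *\<^sub>R axis j 1) - g (x + h *\<^sub>R axis i 1) - g (x + h *\<^sub>R axis j 1) + g x
      = h^2 * pderiv j (pderiv i g) (x + a *\<^sub>R axis i 1 + b *\<^sub>R axis j 1)"
proof -
  let ?ei = "axis i (1::real) :: real^'n" and ?ej = "axis j (1::real) :: real^'n"
  have pt: "\<And>a b. \<bar>a\<bar> \<le> h \<Longrightarrow> \<bar>b\<bar> \<le> h \<Longrightarrow> x + a *\<^sub>R ?ei + b *\<^sub>R ?ej \<in> S"
    using in_ball_pts[OF bx _ _ h(2)] by blast
  have pt2: "\<And>a b. \<bar>a\<bar> \<le> h \<Longrightarrow> \<bar>b\<bar> \<le> h \<Longrightarrow> x + b *\<^sub>R ?ej + a *\<^sub>R ?ei \<in> S"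
    using pt by (simp add: add_ac)
  define \<phi> where "\<phi> s = g (x + h *\<^sub>R ?ej + s *\<^sub>R ?ei) - g (x + s *\<^sub>R ?ei)" for s
  have d\<phi>: "DERIV \<phi> s :> pderiv i g (x + h *\<^sub>R ?ej + s *\<^sub>R ?ei) - pderiv i g (x + s *\<^sub>R ?ei)"
    if "0 \<le> s" "s \<le> h" for s
  proof -
    have a: "g differentiable (at (x + h *\<^sub>R ?ej + s *\<^sub>R ?ei))"
      using smooth_diff_at0[OF S sm pt2[of s h]] that h by simp
    have b: "g differentiable (at (x + s *\<^sub>R ?ei))"
      using smooth_diff_at0[OF S sm pt2[of s 0]] that h by simp
    show ?thesis unfolding \<phi>_def
      by (rule DERIV_diff[OF dir_deriv[OF a] dir_deriv[OF b]])
  qed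
  obtain \<xi> where \<xi>: "0 < \<xi>" "\<xi> < h" and e1:
    "\<phi> h - \<phi> 0 = (h - 0) * (pderiv i g (x + h *\<^sub>R ?ej + \<xi> *\<^sub>R ?ei) - pderiv i g (x + \<xi> *\<^sub>R ?ei))"
    using MVT2[OF h(1) d\<phi>] by auto
  define \<psi> where "\<psi> t = pderiv i g (x + \<xi> *\<^sub>R ?ei + t *\<^sub>R ?ej)" for t
  have d\<psi>: "DERIV \<psi> t :> pderiv j (pderiv i g) (x + \<xi> *\<^sub>R ?ei + t *\<^sub>R ?ej)" if "0 \<le> t" "t \<le> h" for t
  proof -
    have a: "pderiv i g differentiable (at (x + \<xi> *\<^sub>R ?ei + t *\<^sub>R ?ej))"
      using smooth_diff_at0[OF S smooth_pderiv[OF sm] pt[of \<xi> t]] that \<xi> by simp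
    show ?thesis unfolding \<psi>_def by (rule dir_deriv[OF a])
  qed
  obtain \<eta> where \<eta>: "0 < \<eta>" "\<eta> < h" and e2:
    "\<psi> h - \<psi> 0 = (h - 0) * pderiv j (pderiv i g) (x + \<xi> *\<^sub>R ?ei + \<eta> *\<^sub>R ?ej)"
    using MVT2[OF h(1) d\<psi>] by auto
  have "g (x + h *\<^sub>R ?ei + h *\<^sub>R ?ej) - g (x + h *\<^sub>R ?ei) - g (x + h *\<^sub>R ?ej) + g x = \<phi> h - \<phi> 0"
    unfolding \<phi>_def by (simp add: add_ac)
  also have "\<dots> = h * (\<psi> h - \<psi> 0)" using e1 unfolding \<psi>_def by (simp add: add_ac)
  also have "\<dots> = h^2 * pderiv j (pderiv i g) (x + \<xi> *\<^sub>R ?ei + \<eta> *\<^sub>R ?ej)"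
    using e2 by (simp add: power2_eq_square)
  finally show ?thesis using \<xi> \<eta> by (intro exI[of _ \<xi>] exI[of _ \<eta>]) auto
qed

lemma clairaut:
  fixes g :: "real^'n \<Rightarrow> real"
  assumes S: "open S" and sm: "smooth_on S g" and x: "x \<in> S"
  shows "pderiv i (pderiv j g) x = pderiv j (pderiv i g) x"
proof -
  obtain r where r: "r > 0" "ball x r \<subseteq> S" using S x open_contains_ball by blast
  let ?D1 = "pderiv j (pderiv i g)" and ?D2 = "pderiv i (pderiv j g)"
  have c1: "isCont ?D1 x"
    using smooth_diff_at[OF S sm x, of "[j,i]"] by (simp add: differentiable_imp_continuous_within)
  have c2: "isCont ?D2 x"
    using smooth_diff_at[OF S sm x, of "[i,j]"] by (simp add: differentiable_imp_continuous_within)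
  have "\<bar>?D2 x - ?D1 x\<bar> < 2*e" if e: "e > 0" for e
  proof -
    obtain d1 where d1: "d1 > 0" "\<And>y. dist y x < d1 \<Longrightarrow> dist (?D1 y) (?D1 x) < e"
      using c1 e unfolding continuous_at_eps_delta by blast
    obtain d2 where d2: "d2 > 0" "\<And>y. dist y x < d2 \<Longrightarrow> dist (?D2 y) (?D2 x) < e"
      using c2 e unfolding continuous_at_eps_delta by blast
    define h where "h = min r (min d1 d2) / 3"
    have h: "0 < h" "2*h < r" "2*h < d1" "2*h < d2" using r d1 d2 by (auto simp: h_def)
    have dd: "dist (x + a *\<^sub>R axis k 1 + b *\<^sub>R axis l 1) x \<le> 2*h"
      if "\<bar>a\<bar> \<le> h" "\<bar>b\<bar> \<le> h" for a b and k l :: 'n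
    proof -
      have "norm (a *\<^sub>R (axis k 1::real^'n) + b *\<^sub>R (axis l 1::real^'n)) \<le> norm (a *\<^sub>R (axis k 1::real^'n)) + norm (b *\<^sub>R (axis l 1::real^'n))"
        by (rule norm_triangle_ineq)
      also have "\<dots> = \<bar>a\<bar> + \<bar>b\<bar>" by simp
      moreover have "dist (x + (a *\<^sub>R (axis k 1::real^'n) + b *\<^sub>R (axis l 1::real^'n))) x = norm (a *\<^sub>R (axis k 1::real^'n) + b *\<^sub>R (axis l 1::real^'n))"
        by (simp only: dist_norm add_diff_cancel_left')
      ultimately show ?thesis using that by (simp add: add.assoc)
    qed
    obtain a b where ab: "\<bar>a\<bar> \<le> h" "\<bar>b\<bar> \<le> h" and E1:
      "g (x + h *\<^sub>R axis i 1 + h *\<^sub>R axis j 1) - g (x + h *\<^sub>R axis i 1) - g (x + h *\<^sub>R axis j 1) + g x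
      = h^2 * ?D1 (x + a *\<^sub>R axis i 1 + b *\<^sub>R axis j 1)"
      using mixed_mvt[OF S sm r(2) h(1,2), of i j] by blast
    obtain a' b' where ab': "\<bar>a'\<bar> \<le> h" "\<bar>b'\<bar> \<le> h" and E2:
      "g (x + h *\<^sub>R axis j 1 + h *\<^sub>R axis i 1) - g (x + h *\<^sub>R axis j 1) - g (x + h *\<^sub>R axis i 1) + g x
      = h^2 * ?D2 (x + a' *\<^sub>R axis j 1 + b' *\<^sub>R axis i 1)"
      using mixed_mvt[OF S sm r(2) h(1,2), of j i] by blast
    have "h^2 * ?D1 (x + a *\<^sub>R axis i 1 + b *\<^sub>R axis j 1) = h^2 * ?D2 (x + a' *\<^sub>R axis j 1 + b' *\<^sub>R axis i 1)"
    proof -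
      have v: "x + h *\<^sub>R axis i 1 + h *\<^sub>R axis j 1 = x + h *\<^sub>R axis j 1 + h *\<^sub>R (axis i 1 :: real^'n)"
        by (simp add: add_ac)
      show ?thesis using E1 E2 unfolding v by linarith
    qed
    then have eq: "?D1 (x + a *\<^sub>R axis i 1 + b *\<^sub>R axis j 1) = ?D2 (x + a' *\<^sub>R axis j 1 + b' *\<^sub>R axis i 1)"
      using h(1) by simp
    have "dist (x + a *\<^sub>R axis i 1 + b *\<^sub>R axis j 1) x < d1"
      using dd[OF ab, of i j] h(3) by linarith
    then have "dist (?D1 (x + a *\<^sub>R axis i 1 + b *\<^sub>R axis j 1)) (?D1 x) < e"
      by (rule d1(2))
    moreover have "dist (x + a' *\<^sub>R axis j 1 + b' *\<^sub>R axis i 1) x < d2"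
      using dd[OF ab', of j i] h(4) by linarith
    then have "dist (?D2 (x + a' *\<^sub>R axis j 1 + b' *\<^sub>R axis i 1)) (?D2 x) < e"
      by (rule d2(2))
    ultimately show ?thesis using eq by (simp add: dist_real_def)
  qed
  then have "\<bar>?D2 x - ?D1 x\<bar> = 0"
  proof -
    assume H: "\<And>e. e > 0 \<Longrightarrow> \<bar>?D2 x - ?D1 x\<bar> < 2*e"
    show ?thesis
    proof (rule ccontr)
      assume "\<bar>?D2 x - ?D1 x\<bar> \<noteq> 0"
      then have "\<bar>?D2 x - ?D1 x\<bar> > 0" by simp
      from H[OF half_gt_zero[OF this]] show False by simp
    qed
  qed
  then show ?thesis by simp
qed


lemma fdw: "f differentiable (at y) \<Longrightarrow> (f has_derivative frechet_derivative f (at y)) (at y)"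
  using frechet_derivative_works by blast

lemma pderiv_add:
  assumes "f differentiable (at y)" "g differentiable (at y)"
  shows "pderiv k (\<lambda>z. f z + g z) y = pderiv k f y + pderiv k g y"
  using pderiv_has[OF has_derivative_add[OF fdw[OF assms(1)] fdw[OF assms(2)]]] by (simp add: pderiv_def)

lemma pderiv_diff:
  assumes "f differentiable (at y)" "g differentiable (at y)"
  shows "pderiv k (\<lambda>z. f z - g z) y = pderiv k f y - pderiv k g y"
  using pderiv_has[OF has_derivative_diff[OF fdw[OF assms(1)] fdw[OF assms(2)]]] by (simp add: pderiv_def)

lemma pderiv_mult:
  fixes f g :: "real^'n \<Rightarrow> real"
  assumes "f differentiable (at y)" "g differentiable (at y)"
  shows "pderiv k (\<lambda>z. f z * g z) y = pderiv k f y * g y + f y * pderiv k g y"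
  using pderiv_has[OF has_derivative_mult[OF fdw[OF assms(1)] fdw[OF assms(2)]]] by (simp add: pderiv_def)

lemma pderiv_cmult:
  fixes f :: "real^'n \<Rightarrow> real"
  assumes "f differentiable (at y)"
  shows "pderiv k (\<lambda>z. c * f z) y = c * pderiv k f y"
  using pderiv_has[OF has_derivative_mult_right[OF fdw[OF assms(1)]]] by (simp add: pderiv_def)

lemma pderiv_sum:
  fixes f :: "'a::finite \<Rightarrow> real^'n \<Rightarrow> real"
  assumes "\<And>a. f a differentiable (at y)"
  shows "pderiv k (\<lambda>z. \<Sum>a\<in>UNIV. f a z) y = (\<Sum>a\<in>UNIV. pderiv k (f a) y)"
  using pderiv_has[OF has_derivative_sum[of UNIV f "\<lambda>a. frechet_derivative (f a) (at y)", OF fdw[OF assms]]]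
  by (simp add: pderiv_def)

lemma pderiv_div:
  fixes f g :: "real^'n \<Rightarrow> real"
  assumes "f differentiable (at y)" "g differentiable (at y)" "g y \<noteq> 0"
  shows "pderiv k (\<lambda>z. f z / g z) y = (pderiv k f y * g y - f y * pderiv k g y) / (g y)^2"
  using pderiv_has[OF has_derivative_divide[OF fdw[OF assms(1)] fdw[OF assms(2)] assms(3)]] assms(3)
  by (simp add: pderiv_def field_simps power2_eq_square)

lemma pderiv_ln:
  fixes f :: "real^'n \<Rightarrow> real"
  assumes "f differentiable (at y)" "f y > 0"
  shows "pderiv k (\<lambda>z. ln (f z)) y = pderiv k f y / f y"
proof -
  have "((\<lambda>z. ln (f z)) has_derivative (\<lambda>h. frechet_derivative f (at y) h * inverse (f y))) (at y)"
    by (rule DERIV_compose_FDERIV[OF DERIV_ln[OF assms(2)] fdw[OF assms(1)]])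
  from pderiv_has[OF this] show ?thesis by (simp add: pderiv_def divide_inverse)
qed

lemma pderiv_const_on:
  assumes "open S" "y \<in> S" "\<And>z. z \<in> S \<Longrightarrow> f z = c"
  shows "pderiv k f y = 0"
proof -
  have "pderiv k f y = pderiv k (\<lambda>z. c) y" by (rule pderiv_cong[OF assms])
  also have "\<dots> = 0" by (simp add: pderiv_def)
  finally show ?thesis .
qed

definition sig2f :: "('n::finite \<Rightarrow> 'n \<Rightarrow> real^'m::finite \<Rightarrow> real) \<Rightarrow> real^'m \<Rightarrow> real" where
  "sig2f P y = 1/2 * (\<Sum>a\<in>UNIV. \<Sum>b\<in>UNIV. P a a y * P b b y - P a b y * P b a y)"

definition sig2d :: "('n::finite \<Rightarrow> 'n \<Rightarrow> real^'m::finite \<Rightarrow> real) \<Rightarrow> ('n \<Rightarrow> 'n \<Rightarrow> real^'m \<Rightarrow> real) \<Rightarrow> real^'m \<Rightarrow> real" where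
  "sig2d P Q y = 1/2 * (\<Sum>a\<in>UNIV. \<Sum>b\<in>UNIV. (Q a a y * P b b y + P a a y * Q b b y) - (Q a b y * P b a y + P a b y * Q b a y))"

lemma d_sig2f:
  fixes P :: "'n::finite \<Rightarrow> 'n \<Rightarrow> real^'m::finite \<Rightarrow> real"
  assumes d: "\<And>a b. P a b differentiable (at y)"
  shows "pderiv k (sig2f P) y = sig2d P (\<lambda>a b. pderiv k (P a b)) y"
proof -
  have d1: "(\<lambda>z. P a a z * P b b z - P a b z * P b a z) differentiable (at y)" for a b
    using d by simp
  have d2: "(\<lambda>z. \<Sum>b\<in>UNIV. P a a z * P b b z - P a b z * P b a z) differentiable (at y)" for a
    using d1 by simp
  have d3: "(\<lambda>z. \<Sum>a\<in>UNIV. \<Sum>b\<in>UNIV. P a a z * P b b z - P a b z * P b a z) differentiable (at y)"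
    using d2 by simp
  have "pderiv k (sig2f P) y = 1/2 * pderiv k (\<lambda>z. \<Sum>a\<in>UNIV. \<Sum>b\<in>UNIV. P a a z * P b b z - P a b z * P b a z) y"
    unfolding sig2f_def by (rule pderiv_cmult[OF d3])
  also have "\<dots> = 1/2 * (\<Sum>a\<in>UNIV. pderiv k (\<lambda>z. \<Sum>b\<in>UNIV. P a a z * P b b z - P a b z * P b a z) y)"
    by (simp only: pderiv_sum[OF d2])
  also have "\<dots> = 1/2 * (\<Sum>a\<in>UNIV. \<Sum>b\<in>UNIV. pderiv k (\<lambda>z. P a a z * P b b z - P a b z * P b a z) y)"
    by (simp only: pderiv_sum[OF d1])
  also have "\<dots> = sig2d P (\<lambda>a b. pderiv k (P a b)) y"
    unfolding sig2d_def using d by (simp add: pderiv_diff pderiv_mult)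
  finally show ?thesis .
qed

lemma d_sig2d:
  fixes P Q :: "'n::finite \<Rightarrow> 'n \<Rightarrow> real^'m::finite \<Rightarrow> real"
  assumes dP: "\<And>a b. P a b differentiable (at y)" and dQ: "\<And>a b. Q a b differentiable (at y)"
  shows "pderiv k (sig2d P Q) y = sig2d (\<lambda>a b. pderiv k (P a b)) Q y + sig2d P (\<lambda>a b. pderiv k (Q a b)) y"
proof -
  define g where "g a b z = (Q a a z * P b b z + P a a z * Q b b z) - (Q a b z * P b a z + P a b z * Q b a z)" for a b z
  have d1: "g a b differentiable (at y)" for a b
    unfolding g_def using dP dQ by simp
  have d2: "(\<lambda>z. \<Sum>b\<in>UNIV. g a b z) differentiable (at y)" for a
    using d1 by simp
  have d3: "(\<lambda>z. \<Sum>a\<in>UNIV. \<Sum>b\<in>UNIV. g a b z) differentiable (at y)"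
    using d2 by simp
  have "pderiv k (sig2d P Q) y = 1/2 * pderiv k (\<lambda>z. \<Sum>a\<in>UNIV. \<Sum>b\<in>UNIV. g a b z) y"
    unfolding sig2d_def g_def[symmetric] by (rule pderiv_cmult[OF d3])
  also have "\<dots> = 1/2 * (\<Sum>a\<in>UNIV. \<Sum>b\<in>UNIV. pderiv k (g a b) y)"
    by (simp only: pderiv_sum[OF d2] pderiv_sum[OF d1])
  also have "\<dots> = sig2d (\<lambda>a b. pderiv k (P a b)) Q y + sig2d P (\<lambda>a b. pderiv k (Q a b)) y"
  proof -
    have "pderiv k (g a b) y =
        ((pderiv k (Q a a) y * P b b y + pderiv k (P a a) y * Q b b y) - (pderiv k (Q a b) y * P b a y + pderiv k (P a b) y * Q b a y))
      + ((Q a a y * pderiv k (P b b) y + P a a y * pderiv k (Q b b) y) - (Q a b y * pderiv k (P b a) y + P a b y * pderiv k (Q b a) y))"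
      for a b
    proof -
      have "pderiv k (g a b) y = pderiv k (\<lambda>z. (Q a a z * P b b z + P a a z * Q b b z) - (Q a b z * P b a z + P a b z * Q b a z)) y"
        unfolding g_def ..
      also have "\<dots> = (pderiv k (Q a a) y * P b b y + Q a a y * pderiv k (P b b) y
           + (pderiv k (P a a) y * Q b b y + P a a y * pderiv k (Q b b) y))
         - (pderiv k (Q a b) y * P b a y + Q a b y * pderiv k (P b a) y
           + (pderiv k (P a b) y * Q b a y + P a b y * pderiv k (Q b a) y))"
        using dP dQ by (simp add: pderiv_diff pderiv_add pderiv_mult)
      finally show ?thesis by (simp add: algebra_simps)
    qed
    note pw = this
    show ?thesis unfolding sig2d_def
      by (simp only: pw sum.distrib sum_subtractf distrib_left[symmetric]) (simp add: algebra_simps)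
  qed
  finally show ?thesis .
qed

lemma swap_at:
  assumes S: "open S" and sm: "smooth_on S f" and y: "y \<in> S"
  shows "iter_pderiv (xs @ i # j # ys) f y = iter_pderiv (xs @ j # i # ys) f y"
proof -
  let ?g = "iter_pderiv ys f"
  have smg: "smooth_on S ?g" by (rule smooth_on_iter[OF sm])
  have "\<And>z. z \<in> S \<Longrightarrow> pderiv i (pderiv j ?g) z = pderiv j (pderiv i ?g) z"
    by (rule clairaut[OF S smg])
  then have "iter_pderiv xs (pderiv i (pderiv j ?g)) y = iter_pderiv xs (pderiv j (pderiv i ?g)) y"
    by (rule iter_cong[OF S _ y])
  then show ?thesis by (simp add: iter_pderiv_append)
qed


lemma delta_sum_r: "(\<Sum>j\<in>UNIV. h j * (if i = j then 1 else (0::real))) = h (i::'n::finite)"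
proof -
  have "(\<Sum>j\<in>UNIV. h j * (if i = j then 1 else (0::real))) = (\<Sum>j\<in>UNIV. if i = j then h j else 0)"
    by (intro sum.cong) auto
  then show ?thesis by (simp add: sum.delta)
qed

lemma parseval2:
  fixes E :: "'n::finite \<Rightarrow> 'n \<Rightarrow> real"
  assumes comp: "\<And>i j. (\<Sum>a\<in>UNIV. E a i * E a j) = (if i = j then 1 else 0)"
  shows "(\<Sum>a\<in>UNIV. (\<Sum>i\<in>UNIV. E a i * f i) * (\<Sum>j\<in>UNIV. E a j * g j)) = (\<Sum>i\<in>UNIV. f i * g i)"
proof -
  have "(\<Sum>a\<in>UNIV. (\<Sum>i\<in>UNIV. E a i * f i) * (\<Sum>j\<in>UNIV. E a j * g j))
      = (\<Sum>a\<in>UNIV. \<Sum>i\<in>UNIV. \<Sum>j\<in>UNIV. (E a i * f i) * (E a j * g j))"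
    by (simp add: sum_product)
  also have "\<dots> = (\<Sum>i\<in>UNIV. \<Sum>a\<in>UNIV. \<Sum>j\<in>UNIV. (E a i * f i) * (E a j * g j))"
    by (rule sum.swap)
  also have "\<dots> = (\<Sum>i\<in>UNIV. \<Sum>j\<in>UNIV. \<Sum>a\<in>UNIV. (E a i * f i) * (E a j * g j))"
    by (rule sum.cong[OF refl sum.swap])
  also have "\<dots> = (\<Sum>i\<in>UNIV. \<Sum>j\<in>UNIV. (f i * g j) * (\<Sum>a\<in>UNIV. E a i * E a j))"
    by (simp add: sum_distrib_left mult_ac)
  also have "\<dots> = (\<Sum>i\<in>UNIV. f i * g i)"
    by (simp only: comp delta_sum_r)
  finally show ?thesis .
qed

lemma parseval:
  fixes E :: "'n::finite \<Rightarrow> 'n \<Rightarrow> real"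
  assumes comp: "\<And>i j. (\<Sum>a\<in>UNIV. E a i * E a j) = (if i = j then 1 else 0)"
  shows "(\<Sum>a\<in>UNIV. (\<Sum>i\<in>UNIV. E a i * f i)^2) = (\<Sum>i\<in>UNIV. (f i)^2)"
  using parseval2[OF comp, of f f] by (simp add: power2_eq_square)

lemma pull_in3:
  fixes f :: "'a::finite \<Rightarrow> 'b::finite \<Rightarrow> 'c::finite \<Rightarrow> 'd::finite \<Rightarrow> real"
  shows "(\<Sum>a\<in>UNIV. \<Sum>i\<in>UNIV. \<Sum>j\<in>UNIV. \<Sum>k\<in>UNIV. f a i j k)
       = (\<Sum>i\<in>UNIV. \<Sum>j\<in>UNIV. \<Sum>k\<in>UNIV. \<Sum>a\<in>UNIV. f a i j k)"
proof -
  have "(\<Sum>a\<in>UNIV. \<Sum>i\<in>UNIV. \<Sum>j\<in>UNIV. \<Sum>k\<in>UNIV. f a i j k)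
       = (\<Sum>i\<in>UNIV. \<Sum>a\<in>UNIV. \<Sum>j\<in>UNIV. \<Sum>k\<in>UNIV. f a i j k)" by (rule sum.swap)
  also have "\<dots> = (\<Sum>i\<in>UNIV. \<Sum>j\<in>UNIV. \<Sum>a\<in>UNIV. \<Sum>k\<in>UNIV. f a i j k)"
    by (rule sum.cong[OF refl sum.swap])
  also have "\<dots> = (\<Sum>i\<in>UNIV. \<Sum>j\<in>UNIV. \<Sum>k\<in>UNIV. \<Sum>a\<in>UNIV. f a i j k)"
    by (rule sum.cong[OF refl sum.cong[OF refl sum.swap]])
  finally show ?thesis .
qed

lemma pull_out3:
  fixes f :: "'b::finite \<Rightarrow> 'c::finite \<Rightarrow> 'd::finite \<Rightarrow> real"
  shows "(\<Sum>i\<in>UNIV. \<Sum>j\<in>UNIV. \<Sum>k\<in>UNIV. f i j k) = (\<Sum>k\<in>UNIV. \<Sum>i\<in>UNIV. \<Sum>j\<in>UNIV. f i j k)"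
proof -
  have "(\<Sum>i\<in>UNIV. \<Sum>j\<in>UNIV. \<Sum>k\<in>UNIV. f i j k) = (\<Sum>i\<in>UNIV. \<Sum>k\<in>UNIV. \<Sum>j\<in>UNIV. f i j k)"
    by (rule sum.cong[OF refl sum.swap])
  also have "\<dots> = (\<Sum>k\<in>UNIV. \<Sum>i\<in>UNIV. \<Sum>j\<in>UNIV. f i j k)" by (rule sum.swap)
  finally show ?thesis .
qed

locale eigsys =
  fixes E :: "'n::finite \<Rightarrow> 'n \<Rightarrow> real" and l :: "'n \<Rightarrow> real" and h :: "'n \<Rightarrow> 'n \<Rightarrow> real"
    and T :: "'n \<Rightarrow> 'n \<Rightarrow> 'n \<Rightarrow> real"
  assumes on: "\<And>a b. (\<Sum>i\<in>UNIV. E a i * E b i) = (if a = b then 1 else 0)"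
    and comp: "\<And>i j. (\<Sum>a\<in>UNIV. E a i * E a j) = (if i = j then 1 else 0)"
    and hdef: "\<And>i j. h i j = (\<Sum>a\<in>UNIV. l a * E a i * E a j)"
    and s1: "\<And>i j k. T i j k = T j i k" and s2: "\<And>i j k. T i j k = T i k j"
begin

definition Tp :: "'n \<Rightarrow> 'n \<Rightarrow> 'n \<Rightarrow> real" where
  "Tp a b c = (\<Sum>i\<in>UNIV. E a i * (\<Sum>j\<in>UNIV. E b j * (\<Sum>k\<in>UNIV. E c k * T i j k)))"

lemma Tp_flat: "Tp a b c = (\<Sum>i\<in>UNIV. \<Sum>j\<in>UNIV. \<Sum>k\<in>UNIV. E a i * E b j * E c k * T i j k)"
  unfolding Tp_def by (simp add: sum_distrib_left mult_ac)

lemma trace_h: "(\<Sum>i\<in>UNIV. h i i) = (\<Sum>a\<in>UNIV. l a)"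
proof -
  have "(\<Sum>i\<in>UNIV. h i i) = (\<Sum>i\<in>UNIV. \<Sum>a\<in>UNIV. l a * (E a i * E a i))"
    by (simp add: hdef mult_ac)
  also have "\<dots> = (\<Sum>a\<in>UNIV. \<Sum>i\<in>UNIV. l a * (E a i * E a i))" by (rule sum.swap)
  also have "\<dots> = (\<Sum>a\<in>UNIV. l a * (\<Sum>i\<in>UNIV. E a i * E a i))" by (simp add: sum_distrib_left)
  also have "\<dots> = (\<Sum>a\<in>UNIV. l a)" by (simp add: on)
  finally show ?thesis .
qed

lemma sq_h: "(\<Sum>i\<in>UNIV. \<Sum>j\<in>UNIV. (h i j)^2) = (\<Sum>a\<in>UNIV. (l a)^2)"
proof -
  have on': "\<And>a b. (\<Sum>i\<in>UNIV. E a i * E b i) = (if a = b then 1 else 0)" by (rule on)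
  have "(\<Sum>j\<in>UNIV. (h i j)^2) = (\<Sum>a\<in>UNIV. (l a * E a i)^2)" for i
  proof -
    have "(\<Sum>j\<in>UNIV. (h i j)^2) = (\<Sum>j\<in>UNIV. (\<Sum>a\<in>UNIV. E a j * (l a * E a i))^2)"
      by (simp add: hdef mult_ac)
    also have "\<dots> = (\<Sum>a\<in>UNIV. (l a * E a i)^2)"
      by (rule parseval[of "\<lambda>j a. E a j", OF on'])
    finally show ?thesis .
  qed
  then have "(\<Sum>i\<in>UNIV. \<Sum>j\<in>UNIV. (h i j)^2) = (\<Sum>i\<in>UNIV. \<Sum>a\<in>UNIV. (l a)^2 * (E a i * E a i))"
    by (simp add: power2_eq_square mult_ac)
  also have "\<dots> = (\<Sum>a\<in>UNIV. \<Sum>i\<in>UNIV. (l a)^2 * (E a i * E a i))" by (rule sum.swap)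
  also have "\<dots> = (\<Sum>a\<in>UNIV. (l a)^2)" by (simp add: sum_distrib_left[symmetric] on)
  finally show ?thesis .
qed

lemma Tp_sq: "(\<Sum>a\<in>UNIV. \<Sum>b\<in>UNIV. \<Sum>c\<in>UNIV. (Tp a b c)^2) = (\<Sum>i\<in>UNIV. \<Sum>j\<in>UNIV. \<Sum>k\<in>UNIV. (T i j k)^2)"
proof -
  define Y where "Y i j c = (\<Sum>k\<in>UNIV. E c k * T i j k)" for i j c
  define X where "X i b c = (\<Sum>j\<in>UNIV. E b j * Y i j c)" for i b c
  have Tp': "Tp a b c = (\<Sum>i\<in>UNIV. E a i * X i b c)" for a b c unfolding Tp_def X_def Y_def ..
  have "(\<Sum>a\<in>UNIV. \<Sum>b\<in>UNIV. \<Sum>c\<in>UNIV. (Tp a b c)^2) = (\<Sum>b\<in>UNIV. \<Sum>a\<in>UNIV. \<Sum>c\<in>UNIV. (Tp a b c)^2)"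
    by (rule sum.swap)
  also have "\<dots> = (\<Sum>b\<in>UNIV. \<Sum>c\<in>UNIV. \<Sum>a\<in>UNIV. (Tp a b c)^2)"
    by (rule sum.cong[OF refl sum.swap])
  also have "\<dots> = (\<Sum>b\<in>UNIV. \<Sum>c\<in>UNIV. \<Sum>i\<in>UNIV. (X i b c)^2)"
    unfolding Tp' by (simp only: parseval[OF comp])
  also have "\<dots> = (\<Sum>i\<in>UNIV. \<Sum>c\<in>UNIV. \<Sum>b\<in>UNIV. (X i b c)^2)"
  proof -
    have "(\<Sum>b\<in>UNIV. \<Sum>c\<in>UNIV. \<Sum>i\<in>UNIV. (X i b c)^2) = (\<Sum>b\<in>UNIV. \<Sum>i\<in>UNIV. \<Sum>c\<in>UNIV. (X i b c)^2)"
      by (rule sum.cong[OF refl sum.swap])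
    also have "\<dots> = (\<Sum>i\<in>UNIV. \<Sum>b\<in>UNIV. \<Sum>c\<in>UNIV. (X i b c)^2)" by (rule sum.swap)
    also have "\<dots> = (\<Sum>i\<in>UNIV. \<Sum>c\<in>UNIV. \<Sum>b\<in>UNIV. (X i b c)^2)"
      by (rule sum.cong[OF refl sum.swap])
    finally show ?thesis .
  qed
  also have "\<dots> = (\<Sum>i\<in>UNIV. \<Sum>c\<in>UNIV. \<Sum>j\<in>UNIV. (Y i j c)^2)"
    unfolding X_def by (simp only: parseval[OF comp])
  also have "\<dots> = (\<Sum>i\<in>UNIV. \<Sum>j\<in>UNIV. \<Sum>c\<in>UNIV. (Y i j c)^2)"
    by (rule sum.cong[OF refl sum.swap])
  also have "\<dots> = (\<Sum>i\<in>UNIV. \<Sum>j\<in>UNIV. \<Sum>k\<in>UNIV. (T i j k)^2)"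
    unfolding Y_def by (simp only: parseval[OF comp])
  finally show ?thesis .
qed

lemma Tp_s1: "Tp a b c = Tp b a c"
proof -
  have "Tp b a c = (\<Sum>i\<in>UNIV. \<Sum>j\<in>UNIV. \<Sum>k\<in>UNIV. E b i * E a j * E c k * T i j k)" by (rule Tp_flat)
  also have "\<dots> = (\<Sum>j\<in>UNIV. \<Sum>i\<in>UNIV. \<Sum>k\<in>UNIV. E b i * E a j * E c k * T i j k)" by (rule sum.swap)
  also have "\<dots> = (\<Sum>j\<in>UNIV. \<Sum>i\<in>UNIV. \<Sum>k\<in>UNIV. E a j * E b i * E c k * T j i k)"
  proof -
    have pw: "\<And>i j k. E b i * E a j * E c k * T i j k = E a j * E b i * E c k * T j i k"
    proof -
      fix i j k
      have "T i j k = T j i k" by (rule s1)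
      then show "E b i * E a j * E c k * T i j k = E a j * E b i * E c k * T j i k" by (simp add: mult_ac)
    qed
    show ?thesis by (simp only: pw)
  qed
  also have "\<dots> = Tp a b c" by (rule Tp_flat[symmetric])
  finally show ?thesis by simp
qed

lemma Tp_s2: "Tp a b c = Tp a c b"
proof -
  have "Tp a c b = (\<Sum>i\<in>UNIV. \<Sum>j\<in>UNIV. \<Sum>k\<in>UNIV. E a i * E c j * E b k * T i j k)" by (rule Tp_flat)
  also have "\<dots> = (\<Sum>i\<in>UNIV. \<Sum>k\<in>UNIV. \<Sum>j\<in>UNIV. E a i * E c j * E b k * T i j k)"
    by (rule sum.cong[OF refl sum.swap])
  also have "\<dots> = (\<Sum>i\<in>UNIV. \<Sum>k\<in>UNIV. \<Sum>j\<in>UNIV. E a i * E b k * E c j * T i k j)"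
  proof -
    have pw: "\<And>i j k. E a i * E c j * E b k * T i j k = E a i * E b k * E c j * T i k j"
    proof -
      fix i j k
      have "T i j k = T i k j" by (rule s2)
      then show "E a i * E c j * E b k * T i j k = E a i * E b k * E c j * T i k j" by (simp add: mult_ac)
    qed
    show ?thesis by (simp only: pw)
  qed
  also have "\<dots> = Tp a b c" by (rule Tp_flat[symmetric])
  finally show ?thesis by simp
qed

lemma Tp_contract:
  "(\<Sum>a\<in>UNIV. w a * Tp a a c)
     = (\<Sum>k\<in>UNIV. E c k * (\<Sum>i\<in>UNIV. \<Sum>j\<in>UNIV. (\<Sum>a\<in>UNIV. w a * E a i * E a j) * T i j k))"
proof -
  have "(\<Sum>a\<in>UNIV. w a * Tp a a c) = (\<Sum>a\<in>UNIV. \<Sum>i\<in>UNIV. \<Sum>j\<in>UNIV. \<Sum>k\<in>UNIV. w a * (E a i * E a j * E c k * T i j k))"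
    by (simp add: Tp_flat sum_distrib_left)
  also have "\<dots> = (\<Sum>i\<in>UNIV. \<Sum>j\<in>UNIV. \<Sum>k\<in>UNIV. \<Sum>a\<in>UNIV. w a * (E a i * E a j * E c k * T i j k))"
    by (rule pull_in3)
  also have "\<dots> = (\<Sum>i\<in>UNIV. \<Sum>j\<in>UNIV. \<Sum>k\<in>UNIV. E c k * ((\<Sum>a\<in>UNIV. w a * E a i * E a j) * T i j k))"
    by (simp add: sum_distrib_left sum_distrib_right mult_ac)
  also have "\<dots> = (\<Sum>k\<in>UNIV. \<Sum>i\<in>UNIV. \<Sum>j\<in>UNIV. E c k * ((\<Sum>a\<in>UNIV. w a * E a i * E a j) * T i j k))"
    by (rule pull_out3)
  also have "\<dots> = (\<Sum>k\<in>UNIV. E c k * (\<Sum>i\<in>UNIV. \<Sum>j\<in>UNIV. (\<Sum>a\<in>UNIV. w a * E a i * E a j) * T i j k))"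
    by (simp add: sum_distrib_left)
  finally show ?thesis .
qed

lemma trace_Tp: "(\<Sum>a\<in>UNIV. Tp a a c) = (\<Sum>k\<in>UNIV. E c k * (\<Sum>i\<in>UNIV. T i i k))"
proof -
  have "(\<Sum>a\<in>UNIV. Tp a a c) = (\<Sum>a\<in>UNIV. 1 * Tp a a c)" by simp
  also have "\<dots> = (\<Sum>k\<in>UNIV. E c k * (\<Sum>i\<in>UNIV. \<Sum>j\<in>UNIV. (\<Sum>a\<in>UNIV. 1 * E a i * E a j) * T i j k))"
    by (rule Tp_contract)
  also have "\<dots> = (\<Sum>k\<in>UNIV. E c k * (\<Sum>i\<in>UNIV. \<Sum>j\<in>UNIV. T i j k * (if i = j then 1 else 0)))"
    by (simp add: comp mult_ac)
  also have "\<dots> = (\<Sum>k\<in>UNIV. E c k * (\<Sum>i\<in>UNIV. T i i k))"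
    by (simp only: delta_sum_r)
  finally show ?thesis .
qed

lemma con_Tp:
  assumes "\<And>k. (\<Sum>i\<in>UNIV. \<Sum>j\<in>UNIV. (S * (if i = j then 1 else 0) - h i j) * T i j k) = 0"
  shows "(\<Sum>a\<in>UNIV. (S - l a) * Tp a a c) = 0"
proof -
  have w: "(\<Sum>a\<in>UNIV. (S - l a) * E a i * E a j) = S * (if i = j then 1 else 0) - h i j" for i j
  proof -
    have "(\<Sum>a\<in>UNIV. (S - l a) * E a i * E a j) = S * (\<Sum>a\<in>UNIV. E a i * E a j) - (\<Sum>a\<in>UNIV. l a * E a i * E a j)"
      by (simp add: algebra_simps sum_subtractf sum_distrib_left)
    then show ?thesis by (simp add: comp hdef)
  qed
  show ?thesis unfolding Tp_contract w using assms by simp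
qed

lemma quad_Tp:
  fixes v :: "'n \<Rightarrow> real"
  shows "(\<Sum>c\<in>UNIV. (S - l c) * (\<Sum>k\<in>UNIV. E c k * v k)^2)
       = (\<Sum>i\<in>UNIV. \<Sum>j\<in>UNIV. (S * (if i = j then 1 else 0) - h i j) * v i * v j)"
proof -
  have a: "(\<Sum>c\<in>UNIV. (S - l c) * (\<Sum>k\<in>UNIV. E c k * v k)^2)
      = S * (\<Sum>c\<in>UNIV. (\<Sum>k\<in>UNIV. E c k * v k)^2) - (\<Sum>c\<in>UNIV. l c * (\<Sum>k\<in>UNIV. E c k * v k)^2)"
    by (simp add: algebra_simps sum_subtractf sum_distrib_left)
  have b: "(\<Sum>c\<in>UNIV. (\<Sum>k\<in>UNIV. E c k * v k)^2) = (\<Sum>i\<in>UNIV. (v i)^2)" by (rule parseval[OF comp])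
  have c: "(\<Sum>c\<in>UNIV. l c * (\<Sum>k\<in>UNIV. E c k * v k)^2) = (\<Sum>i\<in>UNIV. \<Sum>j\<in>UNIV. h i j * v i * v j)"
  proof -
    have sq: "\<And>c. (\<Sum>k\<in>UNIV. E c k * v k)^2 = (\<Sum>i\<in>UNIV. \<Sum>j\<in>UNIV. (E c i * v i) * (E c j * v j))"
      by (simp only: power2_eq_square sum_product)
    have "(\<Sum>c\<in>UNIV. l c * (\<Sum>k\<in>UNIV. E c k * v k)^2)
        = (\<Sum>c\<in>UNIV. \<Sum>i\<in>UNIV. \<Sum>j\<in>UNIV. l c * ((E c i * v i) * (E c j * v j)))"
      by (simp only: sq sum_distrib_left)
    also have "\<dots> = (\<Sum>i\<in>UNIV. \<Sum>c\<in>UNIV. \<Sum>j\<in>UNIV. l c * ((E c i * v i) * (E c j * v j)))"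
      by (rule sum.swap)
    also have "\<dots> = (\<Sum>i\<in>UNIV. \<Sum>j\<in>UNIV. \<Sum>c\<in>UNIV. l c * ((E c i * v i) * (E c j * v j)))"
      by (rule sum.cong[OF refl sum.swap])
    also have "\<dots> = (\<Sum>i\<in>UNIV. \<Sum>j\<in>UNIV. h i j * v i * v j)"
      by (simp add: hdef sum_distrib_right sum_distrib_left mult_ac)
    finally show ?thesis .
  qed
  have d: "(\<Sum>i\<in>UNIV. \<Sum>j\<in>UNIV. (S * (if i = j then 1 else 0) - h i j) * v i * v j)
      = S * (\<Sum>i\<in>UNIV. (v i)^2) - (\<Sum>i\<in>UNIV. \<Sum>j\<in>UNIV. h i j * v i * v j)"
  proof -
    have "(\<Sum>i\<in>UNIV. \<Sum>j\<in>UNIV. (S * (if i = j then 1 else 0) - h i j) * v i * v j)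
       = (\<Sum>i\<in>UNIV. (\<Sum>j\<in>UNIV. (S * v i) * v j * (if i = j then 1 else 0)) - (\<Sum>j\<in>UNIV. h i j * v i * v j))"
      by (simp add: algebra_simps sum_subtractf)
    also have "\<dots> = (\<Sum>i\<in>UNIV. S * v i * v i - (\<Sum>j\<in>UNIV. h i j * v i * v j))"
      by (simp only: delta_sum_r)
    finally show ?thesis by (simp add: sum_subtractf sum_distrib_left power2_eq_square mult_ac)
  qed
  show ?thesis using a b c d by simp
qed

end


lemma sig2d_sym:
  fixes P Q :: "'n::finite \<Rightarrow> 'n \<Rightarrow> real^'m::finite \<Rightarrow> real"
  assumes sP: "\<And>a b. P a b y = P b a y" and sQ: "\<And>a b. Q a b y = Q b a y"
  shows "sig2d P Q y = (\<Sum>a\<in>UNIV. Q a a y) * (\<Sum>b\<in>UNIV. P b b y) - (\<Sum>a\<in>UNIV. \<Sum>b\<in>UNIV. P a b y * Q a b y)"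
proof -
  have pw: "(Q a a y * P b b y + P a a y * Q b b y) - (Q a b y * P b a y + P a b y * Q b a y)
      = Q a a y * P b b y + Q b b y * P a a y - 2 * (P a b y * Q a b y)" for a b
    using sP[of b a] sQ[of b a] by (simp add: algebra_simps)
  have s1: "(\<Sum>a\<in>UNIV. \<Sum>b\<in>UNIV. Q a a y * P b b y) = (\<Sum>a\<in>UNIV. Q a a y) * (\<Sum>b\<in>UNIV. P b b y)"
    by (simp add: sum_product)
  have s2: "(\<Sum>a\<in>UNIV. \<Sum>b\<in>UNIV. Q b b y * P a a y) = (\<Sum>a\<in>UNIV. Q a a y) * (\<Sum>b\<in>UNIV. P b b y)"
  proof -
    have "(\<Sum>a\<in>UNIV. \<Sum>b\<in>UNIV. Q b b y * P a a y) = (\<Sum>b\<in>UNIV. \<Sum>a\<in>UNIV. Q b b y * P a a y)"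
      by (rule sum.swap)
    then show ?thesis by (simp add: sum_product)
  qed
  have s3: "(\<Sum>a\<in>UNIV. \<Sum>b\<in>UNIV. 2 * (P a b y * Q a b y)) = 2 * (\<Sum>a\<in>UNIV. \<Sum>b\<in>UNIV. P a b y * Q a b y)"
    by (simp add: sum_distrib_left)
  have "sig2d P Q y = 1/2 * (\<Sum>a\<in>UNIV. \<Sum>b\<in>UNIV. Q a a y * P b b y + Q b b y * P a a y - 2 * (P a b y * Q a b y))"
    unfolding sig2d_def pw ..
  also have "\<dots> = 1/2 * ((\<Sum>a\<in>UNIV. \<Sum>b\<in>UNIV. Q a a y * P b b y) + (\<Sum>a\<in>UNIV. \<Sum>b\<in>UNIV. Q b b y * P a a y)
       - (\<Sum>a\<in>UNIV. \<Sum>b\<in>UNIV. 2 * (P a b y * Q a b y)))"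
    by (simp only: sum.distrib sum_subtractf)
  also have "\<dots> = (\<Sum>a\<in>UNIV. Q a a y) * (\<Sum>b\<in>UNIV. P b b y) - (\<Sum>a\<in>UNIV. \<Sum>b\<in>UNIV. P a b y * Q a b y)"
    unfolding s1 s2 s3 by simp
  finally show ?thesis .
qed

lemma deriv_facts:
  fixes u :: "real^'n \<Rightarrow> real" and \<Omega> :: "(real^'n) set"
  assumes S: "open \<Omega>" and sm: "smooth_on \<Omega> u" and x: "x \<in> \<Omega>"
    and eq: "\<forall>y\<in>\<Omega>. sigma2 (hessian u y) = 1" and pos: "\<forall>y\<in>\<Omega>. laplacian u y > 0"
  shows "\<And>a b. hessian u x $ a $ b = hessian u x $ b $ a"
    and "\<And>a b k. iter_pderiv [k,a,b] u x = iter_pderiv [k,b,a] u x"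
    and "\<And>a b k. iter_pderiv [k,a,b] u x = iter_pderiv [b,a,k] u x"
    and "\<And>k. (\<Sum>i\<in>UNIV. \<Sum>j\<in>UNIV. (laplacian u x * (if i = j then 1 else 0) - hessian u x $ i $ j) * iter_pderiv [k,i,j] u x) = 0"
    and "\<And>k. (\<Sum>i\<in>UNIV. \<Sum>j\<in>UNIV. (laplacian u x * (if i = j then 1 else 0) - hessian u x $ i $ j) * iter_pderiv [k,k,i,j] u x)
          = (\<Sum>i\<in>UNIV. \<Sum>j\<in>UNIV. (iter_pderiv [k,i,j] u x)^2) - (\<Sum>i\<in>UNIV. iter_pderiv [k,i,i] u x)^2"
    and "laplacian u x = (\<Sum>i\<in>UNIV. hessian u x $ i $ i)"
    and "\<And>i. pderiv i (\<lambda>y. ln (laplacian u y)) x = (\<Sum>a\<in>UNIV. iter_pderiv [i,a,a] u x) / laplacian u x"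
    and "\<And>i j. pderiv i (pderiv j (\<lambda>y. ln (laplacian u y))) x
          = ((\<Sum>a\<in>UNIV. iter_pderiv [a,a,i,j] u x) * laplacian u x
             - (\<Sum>a\<in>UNIV. iter_pderiv [j,a,a] u x) * (\<Sum>a\<in>UNIV. iter_pderiv [i,a,a] u x)) / (laplacian u x)^2"
proof -
  define H where "H a b = pderiv a (pderiv b u)" for a b
  have dif: "\<And>y xs. y \<in> \<Omega> \<Longrightarrow> iter_pderiv xs u differentiable (at y)"
    by (rule smooth_diff_at[OF S sm])
  have sw: "\<And>y xs i j ys. y \<in> \<Omega> \<Longrightarrow> iter_pderiv (xs @ i # j # ys) u y = iter_pderiv (xs @ j # i # ys) u y"
    by (rule swap_at[OF S sm])
  have hessH: "hessian u y $ a $ b = H a b y" for y a b by (simp add: hessian_def H_def)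
  have lapH: "laplacian u y = (\<Sum>a\<in>UNIV. H a a y)" for y by (simp add: laplacian_def H_def)
  have lapf: "laplacian u = (\<lambda>y. \<Sum>a\<in>UNIV. H a a y)" using lapH by (rule ext)
  have Hsym: "H a b y = H b a y" if "y \<in> \<Omega>" for a b y
    using sw[OF that, of "[]" a b "[]"] by (simp add: H_def)
  show "\<And>a b. hessian u x $ a $ b = hessian u x $ b $ a" using Hsym[OF x] by (simp add: hessH)
  show sT1: "\<And>a b k. iter_pderiv [k,a,b] u x = iter_pderiv [k,b,a] u x"
    using sw[OF x, of "[_]" _ _ "[]"] by simp
  show sT2: "\<And>a b k. iter_pderiv [k,a,b] u x = iter_pderiv [b,a,k] u x"
  proof -
    fix a b k
    have "iter_pderiv [k,a,b] u x = iter_pderiv [a,k,b] u x" using sw[OF x, of "[]" k a "[b]"] by simp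
    also have "\<dots> = iter_pderiv [a,b,k] u x" using sw[OF x, of "[a]" k b "[]"] by simp
    also have "\<dots> = iter_pderiv [b,a,k] u x" using sw[OF x, of "[]" a b "[k]"] by simp
    finally show "iter_pderiv [k,a,b] u x = iter_pderiv [b,a,k] u x" .
  qed
  show "laplacian u x = (\<Sum>i\<in>UNIV. hessian u x $ i $ i)" by (simp add: lapH hessH)
  have Hd: "H a b differentiable (at y)" if "y \<in> \<Omega>" for a b y
    using dif[OF that, of "[a,b]"] by (simp add: H_def)
  have sigH: "sigma2 (hessian u y) = sig2f H y" for y
    by (simp add: sigma2_def sig2f_def hessH)
  have E1: "sig2d H (\<lambda>a b. pderiv k (H a b)) y = 0" if "y \<in> \<Omega>" for k y
  proof -
    have "pderiv k (sig2f H) y = 0"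
      by (rule pderiv_const_on[OF S that, of _ 1]) (use eq sigH in auto)
    then show ?thesis using d_sig2f[of H y k] Hd[OF that] by simp
  qed
  have dH: "pderiv k (H a b) y = iter_pderiv [k,a,b] u y" for k a b y by (simp add: H_def)
  have ddH: "pderiv k (pderiv k (H a b)) y = iter_pderiv [k,k,a,b] u y" for k a b y by (simp add: H_def)
  show "\<And>k. (\<Sum>i\<in>UNIV. \<Sum>j\<in>UNIV. (laplacian u x * (if i = j then 1 else 0) - hessian u x $ i $ j) * iter_pderiv [k,i,j] u x) = 0"
  proof -
    fix k
    have "sig2d H (\<lambda>a b. pderiv k (H a b)) x = (\<Sum>a\<in>UNIV. iter_pderiv [k,a,a] u x) * laplacian u x
        - (\<Sum>a\<in>UNIV. \<Sum>b\<in>UNIV. H a b x * iter_pderiv [k,a,b] u x)"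
      by (subst sig2d_sym) (use Hsym[OF x] sT1 in \<open>auto simp: dH lapH\<close>)
    moreover have "(\<Sum>i\<in>UNIV. \<Sum>j\<in>UNIV. (laplacian u x * (if i = j then 1 else 0) - hessian u x $ i $ j) * iter_pderiv [k,i,j] u x)
        = (\<Sum>a\<in>UNIV. iter_pderiv [k,a,a] u x) * laplacian u x - (\<Sum>a\<in>UNIV. \<Sum>b\<in>UNIV. H a b x * iter_pderiv [k,a,b] u x)"
    proof -
      have "(\<Sum>i\<in>UNIV. \<Sum>j\<in>UNIV. (laplacian u x * (if i = j then 1 else 0) - hessian u x $ i $ j) * iter_pderiv [k,i,j] u x)
         = (\<Sum>i\<in>UNIV. (\<Sum>j\<in>UNIV. (laplacian u x * iter_pderiv [k,i,j] u x) * (if i = j then 1 else 0)) - (\<Sum>j\<in>UNIV. H i j x * iter_pderiv [k,i,j] u x))"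
        by (simp add: hessH algebra_simps sum_subtractf)
      also have "\<dots> = (\<Sum>i\<in>UNIV. laplacian u x * iter_pderiv [k,i,i] u x - (\<Sum>j\<in>UNIV. H i j x * iter_pderiv [k,i,j] u x))"
        by (simp only: delta_sum_r)
      finally show ?thesis by (simp add: sum_subtractf sum_distrib_left sum_distrib_right mult.commute)
    qed
    ultimately show "(\<Sum>i\<in>UNIV. \<Sum>j\<in>UNIV. (laplacian u x * (if i = j then 1 else 0) - hessian u x $ i $ j) * iter_pderiv [k,i,j] u x) = 0"
      using E1[OF x, of k] by simp
  qed
  have Fexp: "(\<Sum>i\<in>UNIV. \<Sum>j\<in>UNIV. (laplacian u x * (if i = j then 1 else 0) - hessian u x $ i $ j) * R i j)
        = (\<Sum>a\<in>UNIV. R a a) * laplacian u x - (\<Sum>a\<in>UNIV. \<Sum>b\<in>UNIV. H a b x * R a b)" for R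
  proof -
    have "(\<Sum>i\<in>UNIV. \<Sum>j\<in>UNIV. (laplacian u x * (if i = j then 1 else 0) - hessian u x $ i $ j) * R i j)
       = (\<Sum>i\<in>UNIV. (\<Sum>j\<in>UNIV. (laplacian u x * R i j) * (if i = j then 1 else 0)) - (\<Sum>j\<in>UNIV. H i j x * R i j))"
      by (simp add: hessH algebra_simps sum_subtractf)
    also have "\<dots> = (\<Sum>i\<in>UNIV. laplacian u x * R i i - (\<Sum>j\<in>UNIV. H i j x * R i j))"
      by (simp only: delta_sum_r)
    finally show ?thesis by (simp add: sum_subtractf sum_distrib_left sum_distrib_right mult.commute)
  qed
  show "\<And>k. (\<Sum>i\<in>UNIV. \<Sum>j\<in>UNIV. (laplacian u x * (if i = j then 1 else 0) - hessian u x $ i $ j) * iter_pderiv [k,k,i,j] u x)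
          = (\<Sum>i\<in>UNIV. \<Sum>j\<in>UNIV. (iter_pderiv [k,i,j] u x)^2) - (\<Sum>i\<in>UNIV. iter_pderiv [k,i,i] u x)^2"
  proof -
    fix k
    have dHd: "pderiv k (H a b) differentiable (at x)" for a b
      using dif[OF x, of "[k,a,b]"] by (simp add: H_def)
    have "pderiv k (sig2d H (\<lambda>a b. pderiv k (H a b))) x = 0"
      by (rule pderiv_const_on[OF S x, of _ 0]) (use E1 in auto)
    then have "sig2d (\<lambda>a b. pderiv k (H a b)) (\<lambda>a b. pderiv k (H a b)) x + sig2d H (\<lambda>a b. pderiv k (pderiv k (H a b))) x = 0"
      using d_sig2d[of H x "\<lambda>a b. pderiv k (H a b)" k] Hd[OF x] dHd by simp
    moreover have "sig2d (\<lambda>a b. pderiv k (H a b)) (\<lambda>a b. pderiv k (H a b)) x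
        = (\<Sum>i\<in>UNIV. iter_pderiv [k,i,i] u x)^2 - (\<Sum>i\<in>UNIV. \<Sum>j\<in>UNIV. (iter_pderiv [k,i,j] u x)^2)"
      by (subst sig2d_sym) (use sT1 in \<open>auto simp: dH power2_eq_square\<close>)
    moreover have "sig2d H (\<lambda>a b. pderiv k (pderiv k (H a b))) x
        = (\<Sum>a\<in>UNIV. iter_pderiv [k,k,a,a] u x) * laplacian u x - (\<Sum>a\<in>UNIV. \<Sum>b\<in>UNIV. H a b x * iter_pderiv [k,k,a,b] u x)"
    proof (subst sig2d_sym)
      show "\<And>a b. H a b x = H b a x" by (rule Hsym[OF x])
      show "\<And>a b. pderiv k (pderiv k (H a b)) x = pderiv k (pderiv k (H b a)) x"
        using sw[OF x, of "[k,k]" _ _ "[]"] by (simp add: H_def)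
    qed (simp add: ddH lapH)
    ultimately show "(\<Sum>i\<in>UNIV. \<Sum>j\<in>UNIV. (laplacian u x * (if i = j then 1 else 0) - hessian u x $ i $ j) * iter_pderiv [k,k,i,j] u x)
          = (\<Sum>i\<in>UNIV. \<Sum>j\<in>UNIV. (iter_pderiv [k,i,j] u x)^2) - (\<Sum>i\<in>UNIV. iter_pderiv [k,i,i] u x)^2"
      unfolding Fexp by linarith
  qed
  have lapd: "laplacian u differentiable (at y)" if "y \<in> \<Omega>" for y
    unfolding lapf using Hd[OF that] by simp
  have dlap: "pderiv i (laplacian u) y = (\<Sum>a\<in>UNIV. iter_pderiv [i,a,a] u y)" if "y \<in> \<Omega>" for i y
    unfolding lapf using pderiv_sum[of "\<lambda>a. H a a" y i] Hd[OF that] by (simp add: H_def)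
  have db: "pderiv i (\<lambda>y. ln (laplacian u y)) y = (\<Sum>a\<in>UNIV. iter_pderiv [i,a,a] u y) / laplacian u y"
    if "y \<in> \<Omega>" for i y
    using pderiv_ln[OF lapd[OF that], of i] pos that dlap[OF that] by simp
  show "\<And>i. pderiv i (\<lambda>y. ln (laplacian u y)) x = (\<Sum>a\<in>UNIV. iter_pderiv [i,a,a] u x) / laplacian u x"
    using db[OF x] .
  show "\<And>i j. pderiv i (pderiv j (\<lambda>y. ln (laplacian u y))) x
          = ((\<Sum>a\<in>UNIV. iter_pderiv [a,a,i,j] u x) * laplacian u x
             - (\<Sum>a\<in>UNIV. iter_pderiv [j,a,a] u x) * (\<Sum>a\<in>UNIV. iter_pderiv [i,a,a] u x)) / (laplacian u x)^2"
  proof -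
    fix i j
    define N where "N y = (\<Sum>a\<in>UNIV. iter_pderiv [j,a,a] u y)" for y
    have dif3: "pderiv j (pderiv a (pderiv a u)) differentiable (at x)" for a
      using dif[OF x, of "[j,a,a]"] by simp
    have Nd: "N differentiable (at x)" unfolding N_def using dif3 by simp
    have dN: "pderiv i N x = (\<Sum>a\<in>UNIV. iter_pderiv [i,j,a,a] u x)"
      unfolding N_def using pderiv_sum[of "\<lambda>a. iter_pderiv [j,a,a] u" x i] dif3 by simp
    have p4: "iter_pderiv [i,j,a,a] u x = iter_pderiv [a,a,i,j] u x" for a
    proof -
      have "iter_pderiv [i,j,a,a] u x = iter_pderiv [i,a,j,a] u x" using sw[OF x, of "[i]" j a "[a]"] by simp
      also have "\<dots> = iter_pderiv [a,i,j,a] u x" using sw[OF x, of "[]" i a "[j,a]"] by simp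
      also have "\<dots> = iter_pderiv [a,i,a,j] u x" using sw[OF x, of "[a,i]" j a "[]"] by simp
      also have "\<dots> = iter_pderiv [a,a,i,j] u x" using sw[OF x, of "[a]" i a "[j]"] by simp
      finally show ?thesis .
    qed
    have "pderiv i (pderiv j (\<lambda>y. ln (laplacian u y))) x = pderiv i (\<lambda>y. N y / laplacian u y) x"
      by (rule pderiv_cong[OF S x]) (simp add: db N_def)
    also have "\<dots> = (pderiv i N x * laplacian u x - N x * pderiv i (laplacian u) x) / (laplacian u x)^2"
      by (rule pderiv_div[OF Nd lapd[OF x]]) (use pos x in auto)
    finally show "pderiv i (pderiv j (\<lambda>y. ln (laplacian u y))) x
          = ((\<Sum>a\<in>UNIV. iter_pderiv [a,a,i,j] u x) * laplacian u x
             - (\<Sum>a\<in>UNIV. iter_pderiv [j,a,a] u x) * (\<Sum>a\<in>UNIV. iter_pderiv [i,a,a] u x)) / (laplacian u x)^2"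
      using dN p4 dlap[OF x] unfolding N_def by simp
  qed
qed


definition gh :: "real \<Rightarrow> real \<Rightarrow> real \<Rightarrow> real \<Rightarrow> real" where
  "gh n S e x = -3*(n-1)*(1+e)*S^2 + 6*S*x + (S+(1+e)*x)*(4*(n-1)*S - 2*n*x)"

lemma gh_n5_identity:
  fixes n s S Z e x :: real
  assumes s2: "s^2 = 3*n^2+1" and hx: "2*n*x = S*(n+1+s-Z)" and he: "6*n*(n-1)*e = (s-n-1)*Z"
  shows "12*n^2*(n-1) * gh n S e x
       = S^2 * Z * ((n-1)*(4*n*(3*n-1) + 4*n* s + 2*Z*(n+2-2* s)) - Z^2*(s-n-1))"
  unfolding gh_def using assms by algebra

lemma gh_concave:
  fixes n S e x X :: real
  assumes "n \<ge> 0" "e \<ge> 0" "0 \<le> x" "x \<le> X" "gh n S e 0 \<ge> 0" "gh n S e X \<ge> 0"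
  shows "gh n S e x \<ge> 0"
proof -
  have id: "X * gh n S e x = (X - x) * gh n S e 0 + x * gh n S e X + 2*n*(1+e)*x*X*(X-x)"
    unfolding gh_def by algebra
  have "(X - x) * gh n S e 0 \<ge> 0" using assms by simp
  moreover have "x * gh n S e X \<ge> 0" using assms by simp
  moreover have "2*n*(1+e)*x*X*(X-x) \<ge> 0" using assms by simp
  ultimately have X: "X * gh n S e x \<ge> 0" unfolding id by linarith
  show ?thesis
  proof (cases "X = 0")
    case True then have "x = 0" using assms by simp
    then show ?thesis using assms by simp
  next
    case False then have "X > 0" using assms by simp
    then show ?thesis using X by (simp add: zero_le_mult_iff)
  qed
qed

lemma gh_n4:
  fixes S \<mu> e :: real
  assumes S: "S > 0" and m1: "-S/2 < \<mu>" and m2: "\<mu> \<le> S/4" and e: "e = 2/9*(1/2 + \<mu>/S)"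
  shows "0 < e" "gh 4 S e 0 \<ge> 0" "gh 4 S e (S - \<mu>) \<ge> 0"
proof -
  have he: "9*e*S = S + 2*\<mu>" using e S by (simp add: field_simps)
  have e1: "9*e*S > 0" using he m1 by simp
  then show "0 < e" using S by (simp add: zero_less_mult_iff)
  have e2: "9*e*S \<le> 3/2*S" using he m2 by simp
  then have e3: "e \<le> 1/6" using S by simp
  have "gh 4 S e 0 = S^2 * (3 - 9*e)" unfolding gh_def by algebra
  then show "gh 4 S e 0 \<ge> 0" using e3 by simp
  have "gh 4 S e (S - \<mu>) = 18*e*(1+e)*(3-9*e)*S^2" unfolding gh_def using he by algebra
  moreover have "18*e*(1+e)*(3-9*e)*S^2 \<ge> 0" using \<open>0 < e\<close> e3 by simp
  ultimately show "gh 4 S e (S - \<mu>) \<ge> 0" by simp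
qed

lemma gh_n5:
  fixes n S \<mu> e s :: real
  assumes n: "n \<ge> 5" and s: "s = sqrt (3*n^2+1)" and S: "S > 0"
    and m1: "\<mu>/S \<ge> - (s - (n-1))/(2*n)" and m2: "\<mu> \<le> S/n"
    and e: "e = (s - (n+1))/(3*(n-1)) * ((s - (n-1))/(2*n) + \<mu>/S)"
  shows "0 \<le> e" "gh n S e 0 \<ge> 0" "gh n S e (S - \<mu>) \<ge> 0"
proof -
  have s2: "s^2 = 3*n^2+1" using s by simp
  have s0: "s \<ge> 0" using s by simp
  have sn: "s \<ge> n + 1"
  proof -
    have "(n+1)^2 \<le> s^2" using s2 n by (simp add: power2_eq_square algebra_simps)
    then show ?thesis using s0 by (rule power2_le_imp_le)
  qed
  define Z where "Z = 2*n*((s - (n-1))/(2*n) + \<mu>/S)"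
  have "(s - (n-1))/(2*n) + \<mu>/S \<ge> 0" using m1 minus_divide_left[of "s-(n-1)" "2*n"] by linarith
  then have Z0: "Z \<ge> 0" using n unfolding Z_def by simp
  have h1: "\<mu>/S \<le> 1/n" using m2 S n by (simp add: field_simps)
  have nm: "n*(\<mu>/S) \<le> 1"
  proof -
    have "n*(\<mu>/S) \<le> n*(1/n)" by (rule mult_left_mono[OF h1]) (use n in simp)
    also have "n*(1/n) = 1" using n by simp
    finally show ?thesis .
  qed
  have "Z = s - n + 1 + 2*(n*(\<mu>/S))" unfolding Z_def using n by (simp add: field_simps)
  then have Z1: "Z \<le> s - n + 3" using nm by linarith
  have he: "6*n*(n-1)*e = (s-n-1)*Z" using n unfolding e Z_def by (simp add: field_simps)
  have hx: "2*n*(S - \<mu>) = S*(n+1+s-Z)" using n S unfolding Z_def by (simp add: field_simps)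
  have sn1: "s - n - 1 \<ge> 0" using sn by simp
  show "0 \<le> e"
  proof -
    have "6*n*(n-1)*e \<ge> 0" using he sn1 Z0 by simp
    moreover have "n*(n-1) > 0" using n by simp
    ultimately show ?thesis by (simp add: zero_le_mult_iff)
  qed
  have "(s-n-1)*Z \<le> (s-n-1)*(s-n+3)" using Z1 sn1 by (simp add: mult_left_mono)
  also have "\<dots> = 2*n*(n-1) - 2*(n-1)*(s-n-1)" using s2 by algebra
  also have "\<dots> \<le> 2*n*(n-1)" using sn1 n by simp
  finally have "6*n*(n-1)*e \<le> 2*n*(n-1)" using he by simp
  then have "(2*n*(n-1))*(3*e) \<le> (2*n*(n-1))*1" by (simp add: algebra_simps)
  moreover have "2*n*(n-1) > 0" using n by simp
  ultimately have "3*e \<le> 1" using mult_le_cancel_left_pos by blast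
  then have "e \<le> 1/3" by simp
  moreover have "gh n S e 0 = (n-1)*S^2*(1 - 3*e)" unfolding gh_def by algebra
  ultimately show "gh n S e 0 \<ge> 0" using n by simp
  define h where "h = (n-1)*(4*n*(3*n-1) + 4*n* s + 2*Z*(n+2-2* s)) - Z^2*(s-n-1)"
  have id: "12*n^2*(n-1) * gh n S e (S - \<mu>) = S^2 * Z * h"
    unfolding h_def by (rule gh_n5_identity[OF s2 hx he])
  have c1: "2*(n-1)*(2* s-n-2) \<ge> 0" using sn n by simp
  have "2*(n-1)*(2* s-n-2)*Z \<le> 2*(n-1)*(2* s-n-2)*(s-n+3)" by (rule mult_left_mono[OF Z1 c1])
  moreover have "(s-n-1)*Z^2 \<le> (s-n-1)*(s-n+3)^2"
    using Z0 Z1 sn1 by (simp add: mult_left_mono power_mono)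
  ultimately have "h \<ge> (n-1)*(4*n*(3*n-1) + 4*n* s) - 2*(n-1)*(2* s-n-2)*(s-n+3) - (s-n-1)*(s-n+3)^2"
    unfolding h_def by (simp add: algebra_simps)
  also have "(n-1)*(4*n*(3*n-1) + 4*n* s) - 2*(n-1)*(2* s-n-2)*(s-n+3) - (s-n-1)*(s-n+3)^2
      = 4*(n-1)^2*(2*n-1+s)" using s2 by algebra
  finally have h0: "h \<ge> 4*(n-1)^2*(2*n-1+s)" .
  have "4*(n-1)^2*(2*n-1+s) \<ge> 0" using n s0 by simp
  then have "S^2 * Z * h \<ge> 0" using h0 Z0 by simp
  then have "12*n^2*(n-1) * gh n S e (S - \<mu>) \<ge> 0" using id by simp
  moreover have "12*n^2*(n-1) > 0" using n by simp
  ultimately show "gh n S e (S - \<mu>) \<ge> 0" by (simp add: zero_le_mult_iff)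
qed


lemma sum_over_w:
  fixes g :: "'n::finite \<Rightarrow> real"
  shows "(\<Sum>a\<in>UNIV. g a / (if a = c then 1 else 3)) = ((\<Sum>a\<in>UNIV. g a) + 2 * g c) / 3"
proof -
  have "(\<Sum>a\<in>UNIV. g a / (if a = c then 1 else 3)) = (\<Sum>a\<in>UNIV. g a / 3 + (if a = c then 2 * g a / 3 else 0))"
    by (rule sum.cong) auto
  also have "\<dots> = (\<Sum>a\<in>UNIV. g a) / 3 + 2 * g c / 3"
    by (simp add: sum.distrib sum_divide_distrib)
  finally show ?thesis by simp
qed

lemma weighted_cs:
  fixes t p w :: "'n::finite \<Rightarrow> real"
  assumes w: "\<And>a. w a > 0"
  shows "(\<Sum>a\<in>UNIV. p a * t a)^2 \<le> (\<Sum>a\<in>UNIV. w a * (t a)^2) * (\<Sum>a\<in>UNIV. (p a)^2 / w a)"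
proof -
  have "(\<Sum>a\<in>UNIV. (sqrt (w a) * t a) * (p a / sqrt (w a)))^2
     \<le> (\<Sum>a\<in>UNIV. (sqrt (w a) * t a)^2) * (\<Sum>a\<in>UNIV. (p a / sqrt (w a))^2)"
    by (rule Cauchy_Schwarz_ineq_sum)
  moreover have "(sqrt (w a) * t a) * (p a / sqrt (w a)) = p a * t a" for a
    using w[of a] by (simp add: field_simps)
  moreover have "(sqrt (w a) * t a)^2 = w a * (t a)^2" for a
    using w[of a] by (simp add: power_mult_distrib)
  moreover have "(p a / sqrt (w a))^2 = (p a)^2 / w a" for a
    using w[of a] by (simp add: power_divide)
  ultimately show ?thesis by simp
qed

lemma gh_identity:
  "(S+(1+e)*x)*((n-1)*S+2*x)^2 - ((n+2)*(S+(1+e)*x) - 3*S)*((n-1)*S^2 + 2*x^2) = x * gh n S e x"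
  unfolding gh_def by algebra

lemma percomp:
  fixes t F :: "'n::finite \<Rightarrow> real" and c :: 'n
  assumes con: "(\<Sum>a\<in>UNIV. F a * t a) = 0"
    and nn: "n = real CARD('n)" and S: "S > 0"
    and sF: "(\<Sum>a\<in>UNIV. F a) = (n-1)*S" and sQ: "(\<Sum>a\<in>UNIV. (F a)^2) \<le> (n-1)*S^2"
    and x: "F c > 0" and e: "e \<ge> 0" and g: "gh n S e (F c) \<ge> 0"
  shows "(\<Sum>a\<in>UNIV. (if a = c then 1 else 3) * (t a)^2) \<ge> (1 + (1+e)*F c/S) * (\<Sum>a\<in>UNIV. t a)^2"
proof -
  define w where "w a = (if a = c then 1 else (3::real))" for a
  define v where "v = (\<Sum>a\<in>UNIV. t a)"
  define W where "W = (\<Sum>a\<in>UNIV. w a * (t a)^2)"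
  define x where "x = F c"
  define Q where "Q = (\<Sum>a\<in>UNIV. (F a)^2)"
  define A where "A = (\<Sum>a\<in>UNIV. 1 / w a)"
  define B where "B = (\<Sum>a\<in>UNIV. F a / w a)"
  define C where "C = (\<Sum>a\<in>UNIV. (F a)^2 / w a)"
  define K where "K = 1 + (1+e)*x/S"
  have wpos: "\<And>a. w a > 0" unfolding w_def by simp
  have n1: "n \<ge> 1" using nn by simp
  have A': "A = (n+2)/3" unfolding A_def w_def using sum_over_w[of "\<lambda>a. 1" c] nn by simp
  have B': "B = ((n-1)*S + 2*x)/3" unfolding B_def w_def x_def using sum_over_w[of F c] sF by simp
  have C': "C = (Q + 2*x^2)/3" unfolding C_def w_def x_def Q_def using sum_over_w[of "\<lambda>a. (F a)^2" c] by simp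
  have W0: "W \<ge> 0" unfolding W_def using wpos by (simp add: sum_nonneg less_imp_le)
  have xpos: "x > 0" using x unfolding x_def .
  have Cpos: "C > 0" unfolding C' Q_def using xpos by (simp add: sum_nonneg add_nonneg_pos)
  define p where "p a = C - B * F a" for a
  have cs: "(\<Sum>a\<in>UNIV. p a * t a)^2 \<le> W * (\<Sum>a\<in>UNIV. (p a)^2 / w a)"
    unfolding W_def by (rule weighted_cs[OF wpos])
  have pt: "(\<Sum>a\<in>UNIV. p a * t a) = C * v"
  proof -
    have "(\<Sum>a\<in>UNIV. p a * t a) = (\<Sum>a\<in>UNIV. C * t a - B * (F a * t a))"
      unfolding p_def by (simp add: algebra_simps)
    also have "\<dots> = C * v - B * (\<Sum>a\<in>UNIV. F a * t a)"
      unfolding v_def by (simp add: sum_subtractf sum_distrib_left)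
    finally show ?thesis using con by simp
  qed
  have pp: "(\<Sum>a\<in>UNIV. (p a)^2 / w a) = C * (A*C - B^2)"
  proof -
    have pw: "(p a)^2 / w a = C^2 * (1 / w a) - 2*C*B * (F a / w a) + B^2 * ((F a)^2 / w a)" for a
    proof -
      have "(p a)^2 = C^2 - 2*C*B*F a + B^2*(F a)^2" unfolding p_def by (simp add: power2_eq_square algebra_simps)
      then show ?thesis by (simp add: diff_divide_distrib add_divide_distrib)
    qed
    have "(\<Sum>a\<in>UNIV. (p a)^2 / w a) = (\<Sum>a\<in>UNIV. C^2 * (1 / w a) - 2*C*B * (F a / w a) + B^2 * ((F a)^2 / w a))"
      by (simp only: pw)
    also have "\<dots> = C^2 * A - 2*C*B*B + B^2 * C"
      unfolding A_def B_def C_def by (simp add: sum.distrib sum_subtractf sum_distrib_left)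
    finally show ?thesis by (simp add: power2_eq_square algebra_simps)
  qed
  define D where "D = A*C - B^2"
  have main: "C * v^2 \<le> W * D"
  proof -
    have "C * (C * v^2) \<le> C * (W * D)"
      using cs unfolding pt pp D_def by (simp add: power_mult_distrib power2_eq_square algebra_simps)
    then show ?thesis using Cpos by simp
  qed
  have KD: "K * D \<le> C"
  proof -
    have R: "S + (1+e)*x \<ge> S" using e xpos by simp
    have c1: "(n+2)*(S+(1+e)*x) - 3*S \<ge> 0"
    proof -
      have "(n+2)*(S+(1+e)*x) \<ge> 3*1*S" by (rule mult_mono) (use R n1 S in auto)
      then show ?thesis by simp
    qed
    have "((n+2)*(S+(1+e)*x) - 3*S)*(Q + 2*x^2) \<le> ((n+2)*(S+(1+e)*x) - 3*S)*((n-1)*S^2 + 2*x^2)"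
      using sQ c1 unfolding Q_def by (simp add: mult_left_mono)
    moreover have "x * gh n S e x \<ge> 0" using g xpos unfolding x_def by simp
    ultimately have "(S+(1+e)*x)*((n-1)*S+2*x)^2 - ((n+2)*(S+(1+e)*x) - 3*S)*(Q + 2*x^2) \<ge> 0"
      using gh_identity[of S e x n] by linarith
    moreover have "9*S*(C - K*D) = (S+(1+e)*x)*((n-1)*S+2*x)^2 - ((n+2)*(S+(1+e)*x) - 3*S)*(Q + 2*x^2)"
    proof -
      have SK: "S*K = S + (1+e)*x" using S by (simp add: K_def field_simps)
      have C9: "9*C = 3*(Q+2*x^2)" unfolding C' by simp
      have D9: "9*D = (n+2)*(Q+2*x^2) - ((n-1)*S+2*x)^2" unfolding D_def A' B' C'
        by (simp add: power2_eq_square field_simps)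
      show ?thesis using SK C9 D9 by algebra
    qed
    ultimately have "9*S*(C - K*D) \<ge> 0" by simp
    then have "C - K*D \<ge> 0" using S by (simp add: zero_le_mult_iff)
    then show ?thesis by simp
  qed
  have "K * v^2 \<le> W"
  proof (cases "D > 0")
    case True
    have "D * (K * v^2) = (K*D) * v^2" by simp
    also have "\<dots> \<le> C * v^2" using KD by (simp add: mult_right_mono)
    also have "\<dots> \<le> W * D" by (rule main)
    finally have "D * (K * v^2) \<le> D * W" by (simp add: mult.commute)
    then show ?thesis using True by simp
  next
    case False
    then have "W * D \<le> 0" using W0 by (simp add: mult_nonneg_nonpos)
    then have "C * v^2 \<le> 0" using main by simp
    then have "v^2 \<le> 0" using Cpos by (simp add: mult_le_0_iff)
    then have "v = 0" by simp
    then show ?thesis using W0 by simp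
  qed
  then show ?thesis unfolding K_def W_def w_def v_def x_def by simp
qed


lemma tensor_lb:
  fixes T :: "'n::finite \<Rightarrow> 'n \<Rightarrow> 'n \<Rightarrow> real"
  assumes s1: "\<And>a b c. T a b c = T b a c" and s2: "\<And>a b c. T a b c = T a c b"
  shows "(\<Sum>a\<in>UNIV. \<Sum>b\<in>UNIV. \<Sum>c\<in>UNIV. (T a b c)^2)
     \<ge> (\<Sum>c\<in>UNIV. \<Sum>a\<in>UNIV. (if a = c then 1 else 3) * (T a a c)^2)"
proof -
  define ind where "ind a b c = (if a = b then 1 else 0) + (if a = c then 1 else 0) + (if b = c then 1 else 0)
     - (if a = b \<and> b = c then 2 else (0::real))" for a b c :: 'n
  have ind01: "ind a b c \<le> 1" for a b c unfolding ind_def by auto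
  have "(\<Sum>a\<in>UNIV. \<Sum>b\<in>UNIV. \<Sum>c\<in>UNIV. ind a b c * (T a b c)^2)
      \<le> (\<Sum>a\<in>UNIV. \<Sum>b\<in>UNIV. \<Sum>c\<in>UNIV. (T a b c)^2)"
  proof (intro sum_mono)
    fix a b c
    show "ind a b c * (T a b c)^2 \<le> (T a b c)^2"
      using mult_right_mono[OF ind01[of a b c], of "(T a b c)^2"] by simp
  qed
  moreover have "(\<Sum>a\<in>UNIV. \<Sum>b\<in>UNIV. \<Sum>c\<in>UNIV. ind a b c * (T a b c)^2)
      = 3 * (\<Sum>a\<in>UNIV. \<Sum>c\<in>UNIV. (T a a c)^2) - 2 * (\<Sum>c\<in>UNIV. (T c c c)^2)"
  proof -
    have e1: "(\<Sum>a\<in>UNIV. \<Sum>b\<in>UNIV. \<Sum>c\<in>UNIV. (if a = b then 1 else 0) * (T a b c)^2)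
        = (\<Sum>a\<in>UNIV. \<Sum>c\<in>UNIV. (T a a c)^2)"
    proof -
      have "\<And>a b. (\<Sum>c\<in>UNIV. (if a = b then 1 else 0) * (T a b c)^2) = (if a = b then (\<Sum>c\<in>UNIV. (T a a c)^2) else 0)"
        by auto
      then show ?thesis by (simp add: sum.delta')
    qed
    have e2: "(\<Sum>a\<in>UNIV. \<Sum>b\<in>UNIV. \<Sum>c\<in>UNIV. (if a = c then 1 else 0) * (T a b c)^2)
        = (\<Sum>a\<in>UNIV. \<Sum>c\<in>UNIV. (T a a c)^2)"
    proof -
      have "\<And>a b. (\<Sum>c\<in>UNIV. (if a = c then 1 else 0) * (T a b c)^2) = (T a b a)^2"
      proof -
        fix a b
        have "(\<Sum>c\<in>UNIV. (if a = c then 1 else 0) * (T a b c)^2) = (\<Sum>c\<in>UNIV. (if a = c then (T a b c)^2 else 0))"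
          by (intro sum.cong) auto
        then show "(\<Sum>c\<in>UNIV. (if a = c then 1 else 0) * (T a b c)^2) = (T a b a)^2" by (simp add: sum.delta)
      qed
      then have "(\<Sum>a\<in>UNIV. \<Sum>b\<in>UNIV. \<Sum>c\<in>UNIV. (if a = c then 1 else 0) * (T a b c)^2)
          = (\<Sum>a\<in>UNIV. \<Sum>b\<in>UNIV. (T a b a)^2)" by simp
      also have "\<dots> = (\<Sum>a\<in>UNIV. \<Sum>c\<in>UNIV. (T a a c)^2)"
      proof -
        have "\<And>a b. T a b a = T a a b" by (rule s2)
        then show ?thesis by (simp only:)
      qed
      finally show ?thesis .
    qed
    have e3: "(\<Sum>a\<in>UNIV. \<Sum>b\<in>UNIV. \<Sum>c\<in>UNIV. (if b = c then 1 else 0) * (T a b c)^2)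
        = (\<Sum>a\<in>UNIV. \<Sum>c\<in>UNIV. (T a a c)^2)"
    proof -
      have "\<And>a b. (\<Sum>c\<in>UNIV. (if b = c then 1 else 0) * (T a b c)^2) = (T a b b)^2"
      proof -
        fix a b
        have "(\<Sum>c\<in>UNIV. (if b = c then 1 else 0) * (T a b c)^2) = (\<Sum>c\<in>UNIV. (if b = c then (T a b c)^2 else 0))"
          by (intro sum.cong) auto
        then show "(\<Sum>c\<in>UNIV. (if b = c then 1 else 0) * (T a b c)^2) = (T a b b)^2" by (simp add: sum.delta)
      qed
      then have "(\<Sum>a\<in>UNIV. \<Sum>b\<in>UNIV. \<Sum>c\<in>UNIV. (if b = c then 1 else 0) * (T a b c)^2)
          = (\<Sum>a\<in>UNIV. \<Sum>b\<in>UNIV. (T a b b)^2)" by simp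
      also have "\<dots> = (\<Sum>a\<in>UNIV. \<Sum>b\<in>UNIV. (T b b a)^2)"
      proof -
        have eq: "\<And>a b. (T a b b)^2 = (T b b a)^2"
        proof -
          fix a b
          have "T a b b = T b a b" by (rule s1)
          also have "\<dots> = T b b a" by (rule s2)
          finally show "(T a b b)^2 = (T b b a)^2" by simp
        qed
        show ?thesis by (rule sum.cong[OF refl sum.cong[OF refl eq]])
      qed
      also have "\<dots> = (\<Sum>b\<in>UNIV. \<Sum>a\<in>UNIV. (T b b a)^2)"
        by (rule sum.swap)
      finally show ?thesis .
    qed
    have e4: "(\<Sum>a\<in>UNIV. \<Sum>b\<in>UNIV. \<Sum>c\<in>UNIV. (if a = b \<and> b = c then 2 else 0) * (T a b c)^2)
        = 2 * (\<Sum>c\<in>UNIV. (T c c c)^2)"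
    proof -
      have "(\<Sum>a\<in>UNIV. \<Sum>b\<in>UNIV. \<Sum>c\<in>UNIV. (if a = b \<and> b = c then 2 else 0) * (T a b c)^2)
         = (\<Sum>a\<in>UNIV. \<Sum>b\<in>UNIV. if a = b then 2 * (T a a a)^2 else 0)"
      proof (intro sum.cong refl)
        fix a b
        show "(\<Sum>c\<in>UNIV. (if a = b \<and> b = c then 2 else 0) * (T a b c)^2) = (if a = b then 2 * (T a a a)^2 else 0)"
        proof (cases "a = b")
          case True
          have "(\<Sum>c\<in>UNIV. (if a = b \<and> b = c then 2 else 0) * (T a b c)^2) = (\<Sum>c\<in>UNIV. if b = c then 2 * (T a b c)^2 else 0)"
            using True by (intro sum.cong) auto
          then show ?thesis using True by (simp add: sum.delta)
        qed simp
      qed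
      also have "\<dots> = (\<Sum>a\<in>UNIV. 2 * (T a a a)^2)" by (simp add: sum.delta)
      finally show ?thesis by (simp add: sum_distrib_left)
    qed
    have "(\<Sum>a\<in>UNIV. \<Sum>b\<in>UNIV. \<Sum>c\<in>UNIV. ind a b c * (T a b c)^2)
       = (\<Sum>a\<in>UNIV. \<Sum>b\<in>UNIV. \<Sum>c\<in>UNIV. (if a = b then 1 else 0) * (T a b c)^2)
       + (\<Sum>a\<in>UNIV. \<Sum>b\<in>UNIV. \<Sum>c\<in>UNIV. (if a = c then 1 else 0) * (T a b c)^2)
       + (\<Sum>a\<in>UNIV. \<Sum>b\<in>UNIV. \<Sum>c\<in>UNIV. (if b = c then 1 else 0) * (T a b c)^2)
       - (\<Sum>a\<in>UNIV. \<Sum>b\<in>UNIV. \<Sum>c\<in>UNIV. (if a = b \<and> b = c then 2 else 0) * (T a b c)^2)"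
    proof -
      have pw: "ind a b c * X = (if a = b then 1 else 0) * X + (if a = c then 1 else 0) * X + (if b = c then 1 else 0) * X
          - (if a = b \<and> b = c then 2 else 0) * X" for a b c and X :: real
        unfolding ind_def by (simp add: algebra_simps)
      show ?thesis unfolding pw by (simp only: sum.distrib sum_subtractf)
    qed
    then show ?thesis using e1 e2 e3 e4 by simp
  qed
  moreover have "(\<Sum>c\<in>UNIV. \<Sum>a\<in>UNIV. (if a = c then 1 else 3) * (T a a c)^2)
      = 3 * (\<Sum>a\<in>UNIV. \<Sum>c\<in>UNIV. (T a a c)^2) - 2 * (\<Sum>c\<in>UNIV. (T c c c)^2)"
  proof -
    have "(\<Sum>c\<in>UNIV. \<Sum>a\<in>UNIV. (if a = c then 1 else 3) * (T a a c)^2)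
       = (\<Sum>c\<in>UNIV. \<Sum>a\<in>UNIV. 3 * (T a a c)^2 - (if a = c then 2 * (T c c c)^2 else 0))"
      by (intro sum.cong refl) auto
    also have "\<dots> = 3 * (\<Sum>c\<in>UNIV. \<Sum>a\<in>UNIV. (T a a c)^2) - 2 * (\<Sum>c\<in>UNIV. (T c c c)^2)"
      by (simp add: sum_subtractf sum_distrib_left sum.delta')
    also have "(\<Sum>c\<in>UNIV. \<Sum>a\<in>UNIV. (T a a c)^2) = (\<Sum>a\<in>UNIV. \<Sum>c\<in>UNIV. (T a a c)^2)"
      by (rule sum.swap)
    finally show ?thesis .
  qed
  ultimately show ?thesis by linarith
qed

lemma eigen_ineq:
  fixes l :: "'n::finite \<Rightarrow> real" and T :: "'n \<Rightarrow> 'n \<Rightarrow> 'n \<Rightarrow> real"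
  assumes nn: "n = real CARD('n)" and Sdef: "S = (\<Sum>a\<in>UNIV. l a)" and S: "S > 0"
    and sq: "(\<Sum>a\<in>UNIV. (l a)^2) < S^2"
    and mu: "\<mu> = Min (range l)" and e: "e \<ge> 0" and g0: "gh n S e 0 \<ge> 0" and gm: "gh n S e (S - \<mu>) \<ge> 0"
    and s1: "\<And>a b c. T a b c = T b a c" and s2: "\<And>a b c. T a b c = T a c b"
    and con: "\<And>c. (\<Sum>a\<in>UNIV. (S - l a) * T a a c) = 0"
  shows "(\<Sum>a\<in>UNIV. \<Sum>b\<in>UNIV. \<Sum>c\<in>UNIV. (T a b c)^2) - (\<Sum>c\<in>UNIV. (\<Sum>a\<in>UNIV. T a a c)^2)
     \<ge> (1+e)/S * (\<Sum>c\<in>UNIV. (S - l c) * (\<Sum>a\<in>UNIV. T a a c)^2)"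
proof -
  have sF: "(\<Sum>a\<in>UNIV. S - l a) = (n-1)*S"
    using Sdef nn by (simp add: sum_subtractf algebra_simps)
  have sQ: "(\<Sum>a\<in>UNIV. (S - l a)^2) \<le> (n-1)*S^2"
  proof -
    have "(\<Sum>a\<in>UNIV. (S - l a)^2) = (\<Sum>a\<in>UNIV. S^2 - 2*S*l a + (l a)^2)"
      by (simp add: power2_eq_square algebra_simps)
    also have "\<dots> = n*S^2 - 2*S*S + (\<Sum>a\<in>UNIV. (l a)^2)"
      using Sdef nn by (simp add: sum.distrib sum_subtractf sum_distrib_left)
    finally show ?thesis using sq by (simp add: power2_eq_square algebra_simps)
  qed
  have lc: "l c < S" for c
  proof (rule ccontr)
    assume "\<not> l c < S"
    then have "S \<le> l c" by simp
    then have "S^2 \<le> (l c)^2" using S by (simp add: power_mono)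
    also have "(l c)^2 \<le> (\<Sum>a\<in>UNIV. (l a)^2)"
      by (rule member_le_sum) auto
    finally show False using sq by simp
  qed
  have muc: "\<mu> \<le> l c" for c unfolding mu by (rule Min_le) auto
  have per: "(\<Sum>a\<in>UNIV. (if a = c then 1 else 3) * (T a a c)^2)
      \<ge> (1 + (1+e)*(S - l c)/S) * (\<Sum>a\<in>UNIV. T a a c)^2" for c
  proof (rule percomp[where F="\<lambda>a. S - l a" and n=n])
    show "(\<Sum>a\<in>UNIV. (S - l a) * T a a c) = 0" by (rule con)
    show "gh n S e (S - l c) \<ge> 0"
      by (rule gh_concave[where X="S - \<mu>"]) (use nn e lc[of c] muc[of c] g0 gm in auto)
  qed (use nn S sF sQ lc[of c] e in auto)
  have "(\<Sum>c\<in>UNIV. (1 + (1+e)*(S - l c)/S) * (\<Sum>a\<in>UNIV. T a a c)^2)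
      \<le> (\<Sum>c\<in>UNIV. \<Sum>a\<in>UNIV. (if a = c then 1 else 3) * (T a a c)^2)"
    by (rule sum_mono) (rule per)
  also have "\<dots> \<le> (\<Sum>a\<in>UNIV. \<Sum>b\<in>UNIV. \<Sum>c\<in>UNIV. (T a b c)^2)"
    by (rule tensor_lb[OF s1 s2])
  finally have *: "(\<Sum>c\<in>UNIV. (1 + (1+e)*(S - l c)/S) * (\<Sum>a\<in>UNIV. T a a c)^2)
      \<le> (\<Sum>a\<in>UNIV. \<Sum>b\<in>UNIV. \<Sum>c\<in>UNIV. (T a b c)^2)" .
  have "(\<Sum>c\<in>UNIV. (1 + (1+e)*(S - l c)/S) * (\<Sum>a\<in>UNIV. T a a c)^2)
     = (\<Sum>c\<in>UNIV. (\<Sum>a\<in>UNIV. T a a c)^2) + (1+e)/S * (\<Sum>c\<in>UNIV. (S - l c) * (\<Sum>a\<in>UNIV. T a a c)^2)"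
  proof -
    have pw: "(1 + (1+e)*(S - l c)/S) * V = V + (1+e)/S * ((S - l c) * V)" for c and V :: real
      using S by (simp add: field_simps)
    show ?thesis by (simp only: pw sum.distrib sum_distrib_left)
  qed
  then show ?thesis using * by linarith
qed


lemma sym_dot:
  fixes A :: "real^'n^'n"
  assumes sym: "\<And>i j. A$i$j = A$j$i"
  shows "x \<bullet> (A *v y) = y \<bullet> (A *v x)"
proof -
  have tA: "transpose A = A" using sym by (simp add: transpose_def vec_eq_iff)
  have "x v* A = A *v x"
    using vector_transpose_matrix[of x A] tA by simp
  then have "x \<bullet> (A *v y) = (A *v x) \<bullet> y" using dot_lmul_matrix[of x A y] by simp
  then show ?thesis by (simp add: inner_commute)
qed

lemma zero_lin:
  fixes c d :: real
  assumes "\<And>t. 0 \<le> 2*t*c + t^2*d"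
  shows "c = 0"
proof (rule ccontr)
  assume c: "c \<noteq> 0"
  define \<delta> where "\<delta> = 1 / (\<bar>d\<bar> + 1)"
  have \<delta>: "\<delta> > 0" "\<delta> * \<bar>d\<bar> \<le> 1" unfolding \<delta>_def by (auto simp: field_simps)
  have "0 \<le> 2*(-c*\<delta>)*c + (-c*\<delta>)^2*d" by (rule assms)
  also have "\<dots> = c^2 * \<delta> * (-2 + \<delta> * d)" by (simp add: power2_eq_square algebra_simps)
  also have "\<dots> \<le> c^2 * \<delta> * (-1)"
  proof -
    have "\<delta> * d \<le> \<delta> * \<bar>d\<bar>" using \<delta> by (simp add: mult_left_mono)
    then have "-2 + \<delta> * d \<le> -1" using \<delta> by linarith
    moreover have "c^2 * \<delta> \<ge> 0" using \<delta> by simp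
    ultimately show ?thesis by (rule mult_left_mono)
  qed
  finally have "c^2 * \<delta> \<le> 0" by simp
  moreover have "c^2 * \<delta> > 0" using c \<delta> by simp
  ultimately show False by simp
qed

lemma quad_scale:
  fixes A :: "real^'n^'n"
  shows "(c *\<^sub>R y) \<bullet> (A *v (c *\<^sub>R y)) = c^2 * (y \<bullet> (A *v y))"
  by (simp add: matrix_vector_mult_scaleR power2_eq_square)

lemma eig_step:
  fixes A :: "real^'n^'n" and B :: "(real^'n) set"
  assumes sym: "\<And>i j. A$i$j = A$j$i"
    and fin: "finite B" and cardB: "card B < CARD('n)"
    and eig: "\<And>b. b \<in> B \<Longrightarrow> \<exists>l. A *v b = l *\<^sub>R b"
  shows "\<exists>v. norm v = 1 \<and> (\<exists>l. A *v v = l *\<^sub>R v) \<and> (\<forall>b\<in>B. v \<bullet> b = 0)"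
proof -
  define W where "W = {x::real^'n. \<forall>b\<in>B. x \<bullet> b = 0}"
  define K where "K = sphere (0::real^'n) 1 \<inter> W"
  define q where "q x = x \<bullet> (A *v x)" for x :: "real^'n"
  have Wadd: "x + y \<in> W" if "x \<in> W" "y \<in> W" for x y
    using that unfolding W_def by (simp add: inner_add_left)
  have Wscale: "c *\<^sub>R x \<in> W" if "x \<in> W" for x c
    using that unfolding W_def by simp
  have "dim B \<le> card B" using dim_le_card[of B B] fin by (simp add: span_base subsetI)
  then have "dim B < DIM(real^'n)" using cardB by simp
  then obtain z :: "real^'n" where z: "z \<noteq> 0" "\<And>y. y \<in> span B \<Longrightarrow> orthogonal z y"
    using orthogonal_to_subspace_exists by metis
  have zW: "z \<in> W" unfolding W_def using z(2) span_base by (auto simp: orthogonal_def)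
  have "(1 / norm z) *\<^sub>R z \<in> K" unfolding K_def using z(1) Wscale[OF zW] by simp
  then have Kne: "K \<noteq> {}" by blast
  have Wclosed: "closed W"
  proof -
    have "W = (\<Inter>b\<in>B. {x. b \<bullet> x = 0})" unfolding W_def by (auto simp: inner_commute)
    then show ?thesis by (simp add: closed_INT closed_hyperplane)
  qed
  have Kc: "compact K" unfolding K_def using Wclosed by (simp add: compact_Int_closed)
  have qc: "continuous_on K q" unfolding q_def
    by (intro continuous_intros linear_continuous_on matrix_vector_mul_bounded_linear)
  obtain v where vK: "v \<in> K" and vmin: "\<And>y. y \<in> K \<Longrightarrow> q v \<le> q y"
    using continuous_attains_inf[OF Kc Kne qc] by blast
  define m where "m = q v"
  have vW: "v \<in> W" and vn: "norm v = 1" using vK unfolding K_def by auto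
  have lower: "m * (norm y)^2 \<le> q y" if "y \<in> W" for y
  proof (cases "y = 0")
    case True then show ?thesis by (simp add: q_def)
  next
    case False
    then have ny: "norm y > 0" by simp
    have "(1 / norm y) *\<^sub>R y \<in> K" unfolding K_def using False Wscale[OF that] by simp
    then have "m \<le> q ((1 / norm y) *\<^sub>R y)" unfolding m_def by (rule vmin)
    also have "\<dots> = (1 / norm y)^2 * q y" unfolding q_def by (rule quad_scale)
    finally have "m * (norm y)^2 \<le> (1 / norm y)^2 * q y * (norm y)^2"
      by (simp add: mult_right_mono)
    also have "\<dots> = q y" using ny by (simp add: field_simps power2_eq_square)
    finally show ?thesis .
  qed
  have orth: "w \<bullet> (A *v v) - m * (v \<bullet> w) = 0" if wW: "w \<in> W" for w
  proof (rule zero_lin[where d = "q w - m * (norm w)^2"])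
    fix t :: real
    have yW: "v + t *\<^sub>R w \<in> W" using Wadd[OF vW Wscale[OF wW]] .
    have n2: "(norm (v + t *\<^sub>R w))^2 = 1 + 2*t*(v \<bullet> w) + t^2 * (norm w)^2"
    proof -
      have vv: "v \<bullet> v = 1" using vn power2_norm_eq_inner[of v] by simp
      show ?thesis unfolding power2_norm_eq_inner
        using vv by (simp add: inner_add_left inner_add_right inner_commute power2_eq_square algebra_simps)
    qed
    have qy: "q (v + t *\<^sub>R w) = q v + 2*t*(w \<bullet> (A *v v)) + t^2 * q w"
    proof -
      have "v \<bullet> (A *v w) = w \<bullet> (A *v v)" by (rule sym_dot[OF sym])
      then show ?thesis unfolding q_def
        by (simp add: matrix_vector_right_distrib matrix_vector_mult_scaleR inner_add_left inner_add_right
            power2_eq_square algebra_simps)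
    qed
    have "m * (norm (v + t *\<^sub>R w))^2 \<le> q (v + t *\<^sub>R w)" by (rule lower[OF yW])
    then show "0 \<le> 2*t*(w \<bullet> (A *v v) - m * (v \<bullet> w)) + t^2 * (q w - m * (norm w)^2)"
      unfolding n2 qy m_def by (simp add: algebra_simps)
  qed
  define r where "r = A *v v - m *\<^sub>R v"
  have rW: "r \<in> W" unfolding W_def mem_Collect_eq
  proof
    fix b assume b: "b \<in> B"
    obtain lb where lb: "A *v b = lb *\<^sub>R b" using eig[OF b] by blast
    have "(A *v v) \<bullet> b = v \<bullet> (A *v b)" using sym_dot[OF sym, of b v] by (simp add: inner_commute)
    also have "\<dots> = 0" using vW b unfolding lb W_def by simp
    finally have "(A *v v) \<bullet> b = 0" .
    moreover have "v \<bullet> b = 0" using vW b unfolding W_def by simp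
    ultimately show "r \<bullet> b = 0" by (simp add: r_def inner_diff_left)
  qed
  have "r \<bullet> r = r \<bullet> (A *v v - m *\<^sub>R v)" by (simp only: r_def[symmetric])
  also have "\<dots> = r \<bullet> (A *v v) - m * (v \<bullet> r)" by (simp add: inner_diff_right inner_commute)
  also have "\<dots> = 0" by (rule orth[OF rW])
  finally have "r \<bullet> r = 0" .
  then have "r = 0" by simp
  then have "A *v v = m *\<^sub>R v" unfolding r_def by simp
  then show ?thesis using vn vW unfolding W_def by blast
qed

lemma eig_basis_sets:
  fixes A :: "real^'n^'n"
  assumes sym: "\<And>i j. A$i$j = A$j$i"
  shows "k \<le> CARD('n) \<Longrightarrow> \<exists>B. finite B \<and> card B = k \<and> (\<forall>v\<in>B. norm v = 1 \<and> (\<exists>l. A *v v = l *\<^sub>R v))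
          \<and> (\<forall>v\<in>B. \<forall>w\<in>B. v \<noteq> w \<longrightarrow> v \<bullet> w = 0)"
proof (induction k)
  case 0
  show ?case by (intro exI[of _ "{}"]) simp
next
  case (Suc k)
  then obtain B where B: "finite B" "card B = k" "\<forall>v\<in>B. norm v = 1 \<and> (\<exists>l. A *v v = l *\<^sub>R v)"
    "\<forall>v\<in>B. \<forall>w\<in>B. v \<noteq> w \<longrightarrow> v \<bullet> w = 0" by auto
  have "card B < CARD('n)" using B(2) Suc.prems by simp
  then obtain v where v: "norm v = 1" "\<exists>l. A *v v = l *\<^sub>R v" "\<forall>b\<in>B. v \<bullet> b = 0"
    using eig_step[OF sym B(1)] B(3) by blast
  have vB: "v \<notin> B"
  proof
    assume "v \<in> B"
    then have "v \<bullet> v = 0" using v(3) by blast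
    then show False using v(1) by simp
  qed
  show ?case
  proof (intro exI[of _ "insert v B"] conjI)
    show "finite (insert v B)" using B(1) by simp
    show "card (insert v B) = Suc k" using B(1,2) vB by simp
    show "\<forall>x\<in>insert v B. norm x = 1 \<and> (\<exists>l. A *v x = l *\<^sub>R x)" using B(3) v(1,2) by blast
    show "\<forall>x\<in>insert v B. \<forall>w\<in>insert v B. x \<noteq> w \<longrightarrow> x \<bullet> w = 0"
      using B(4) v(3) by (auto simp: inner_commute)
  qed
qed

lemma spectral:
  fixes A :: "real^'n^'n"
  assumes sym: "\<And>i j. A$i$j = A$j$i"
  obtains e :: "'n \<Rightarrow> real^'n" and l :: "'n \<Rightarrow> real"
  where "\<And>a b. e a \<bullet> e b = (if a = b then 1 else 0)" "\<And>a. A *v e a = l a *\<^sub>R e a"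
proof -
  obtain B where B: "finite B" "card B = CARD('n)" "\<forall>v\<in>B. norm v = 1 \<and> (\<exists>l. A *v v = l *\<^sub>R v)"
    "\<forall>v\<in>B. \<forall>w\<in>B. v \<noteq> w \<longrightarrow> v \<bullet> w = 0"
    using eig_basis_sets[OF sym, of "CARD('n)"] by auto
  obtain h where h: "bij_betw h (UNIV::'n set) B"
    using finite_same_card_bij[of "UNIV::'n set" B] B(1,2) by auto
  have hB: "h a \<in> B" for a using h by (auto simp: bij_betw_def)
  have hinj: "h a = h b \<Longrightarrow> a = b" for a b using h by (auto simp: bij_betw_def inj_on_def)
  define l where "l a = (SOME c. A *v h a = c *\<^sub>R h a)" for a
  have "A *v h a = l a *\<^sub>R h a" for a
    unfolding l_def using B(3) hB[of a] by (metis (mono_tags, lifting) someI_ex)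
  moreover have "h a \<bullet> h b = (if a = b then 1 else 0)" for a b
  proof (cases "a = b")
    case True
    then show ?thesis using B(3) hB[of a] by (simp add: dot_square_norm)
  next
    case False
    then show ?thesis using B(4) hB[of a] hB[of b] hinj by auto
  qed
  ultimately show ?thesis using that by blast
qed

lemma completeness:
  fixes e :: "'n \<Rightarrow> real^'n"
  assumes on: "\<And>a b. e a \<bullet> e b = (if a = b then 1 else 0)"
  shows "(\<Sum>a\<in>UNIV. e a $ i * e a $ j) = (if i = j then 1 else 0)"
proof -
  define Q :: "real^'n^'n" where "Q = (\<chi> i a. e a $ i)"
  have on': "(\<Sum>k\<in>UNIV. e a $ k * e b $ k) = (if a = b then 1 else 0)" for a b
    using on[of a b] by (simp add: inner_vec_def)
  have "transpose Q ** Q = mat 1"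
    by (simp add: Q_def vec_eq_iff matrix_matrix_mult_def transpose_def mat_def on')
  then have "orthogonal_matrix Q" by (simp add: orthogonal_matrix)
  then have "Q ** transpose Q = mat 1" by (simp add: orthogonal_matrix_def)
  then have "(Q ** transpose Q) $ i $ j = mat 1 $ i $ j" by simp
  then show ?thesis by (simp add: Q_def matrix_matrix_mult_def transpose_def mat_def)
qed

lemma eigen_set:
  fixes A :: "real^'n^'n" and e :: "'n \<Rightarrow> real^'n" and l :: "'n \<Rightarrow> real"
  assumes sym: "\<And>i j. A$i$j = A$j$i"
    and on: "\<And>a b. e a \<bullet> e b = (if a = b then 1 else 0)" and ev: "\<And>a. A *v e a = l a *\<^sub>R e a"
  shows "{c. is_eigenvalue A c} = range l"
proof
  show "range l \<subseteq> {c. is_eigenvalue A c}"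
  proof clarify
    fix a
    have "e a \<noteq> 0" using on[of a a] by auto
    then show "is_eigenvalue A (l a)" unfolding is_eigenvalue_def using ev by blast
  qed
  show "{c. is_eigenvalue A c} \<subseteq> range l"
  proof clarify
    fix c assume "is_eigenvalue A c"
    then obtain v where v: "v \<noteq> 0" "A *v v = c *\<^sub>R v" unfolding is_eigenvalue_def by blast
    show "c \<in> range l"
    proof (rule ccontr)
      assume nc: "c \<notin> range l"
      have z: "e a \<bullet> v = 0" for a
      proof -
        have "c * (e a \<bullet> v) = e a \<bullet> (A *v v)" using v(2) by simp
        also have "\<dots> = v \<bullet> (A *v e a)" by (rule sym_dot[OF sym])
        also have "\<dots> = l a * (e a \<bullet> v)" using ev[of a] by (simp add: inner_commute)
        finally have "(c - l a) * (e a \<bullet> v) = 0" by (simp add: algebra_simps)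
        moreover have "c - l a \<noteq> 0" using nc by auto
        ultimately show ?thesis by simp
      qed
      have "v $ i = 0" for i
      proof -
        have "(\<Sum>j\<in>UNIV. (if i = j then 1 else 0) * v $ j) = (\<Sum>j\<in>UNIV. (if i = j then v $ j else 0))"
          by (intro sum.cong) auto
        then have "v $ i = (\<Sum>j\<in>UNIV. (if i = j then 1 else 0) * v $ j)" by (simp add: sum.delta)
        also have "\<dots> = (\<Sum>j\<in>UNIV. (\<Sum>a\<in>UNIV. e a $ i * e a $ j) * v $ j)"
          by (simp only: completeness[OF on])
        also have "\<dots> = (\<Sum>j\<in>UNIV. \<Sum>a\<in>UNIV. e a $ i * (e a $ j * v $ j))"
          by (simp add: sum_distrib_right mult.assoc)
        also have "\<dots> = (\<Sum>a\<in>UNIV. \<Sum>j\<in>UNIV. e a $ i * (e a $ j * v $ j))"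
          by (rule sum.swap)
        also have "\<dots> = (\<Sum>a\<in>UNIV. e a $ i * (e a \<bullet> v))"
          by (simp add: inner_vec_def sum_distrib_left)
        also have "\<dots> = 0" using z by simp
        finally show ?thesis .
      qed
      then have "v = 0" by (simp add: vec_eq_iff)
      then show False using v(1) by simp
    qed
  qed
qed


lemma diag:
  fixes H :: "real^'n^'n"
  assumes symH: "\<And>i j. H$i$j = H$j$i"
  obtains E :: "'n \<Rightarrow> 'n \<Rightarrow> real" and l :: "'n \<Rightarrow> real"
  where "\<And>a b. (\<Sum>i\<in>UNIV. E a i * E b i) = (if a = b then 1 else 0)"
    "\<And>i j. (\<Sum>a\<in>UNIV. E a i * E a j) = (if i = j then 1 else 0)"
    "\<And>i j. H$i$j = (\<Sum>a\<in>UNIV. l a * E a i * E a j)"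
    "lambda_min H = Min (range l)"
proof -
  obtain e :: "'n \<Rightarrow> real^'n" and l where on: "\<And>a b. e a \<bullet> e b = (if a = b then 1 else 0)"
    and ev: "\<And>a. H *v e a = l a *\<^sub>R e a"
    using spectral[OF symH] by blast
  define E where "E a i = e a $ i" for a i
  have on': "(\<Sum>i\<in>UNIV. E a i * E b i) = (if a = b then 1 else 0)" for a b
    using on[of a b] unfolding E_def by (simp add: inner_vec_def)
  have comp: "(\<Sum>a\<in>UNIV. E a i * E a j) = (if i = j then 1 else 0)" for i j
    unfolding E_def by (rule completeness[OF on])
  have evc: "(\<Sum>k\<in>UNIV. H$i$k * E a k) = l a * E a i" for a i
    using arg_cong[OF ev[of a], of "\<lambda>v. v $ i"] unfolding E_def by (simp add: matrix_vector_mult_def)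
  have hd: "H$i$j = (\<Sum>a\<in>UNIV. l a * E a i * E a j)" for i j
  proof -
    have "(\<Sum>a\<in>UNIV. l a * E a i * E a j) = (\<Sum>a\<in>UNIV. (\<Sum>k\<in>UNIV. H$i$k * E a k) * E a j)"
      by (simp add: evc)
    also have "\<dots> = (\<Sum>a\<in>UNIV. \<Sum>k\<in>UNIV. H$i$k * (E a k * E a j))"
      by (simp add: sum_distrib_right mult.assoc)
    also have "\<dots> = (\<Sum>k\<in>UNIV. \<Sum>a\<in>UNIV. H$i$k * (E a k * E a j))" by (rule sum.swap)
    also have "\<dots> = (\<Sum>k\<in>UNIV. H$i$k * (if k = j then 1 else 0))"
      by (simp add: sum_distrib_left[symmetric] comp)
    also have "\<dots> = H$i$j"
    proof -
      have "(\<Sum>k\<in>UNIV. H$i$k * (if k = j then 1 else 0)) = (\<Sum>k\<in>UNIV. if k = j then H$i$k else 0)"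
        by (intro sum.cong) auto
      then show ?thesis by (simp add: sum.delta')
    qed
    finally show ?thesis by simp
  qed
  have "lambda_min H = Min (range l)"
    unfolding lambda_min_def using eigen_set[OF symH on ev] by simp
  then show ?thesis using that on' comp hd by blast
qed

lemma sigma2_sym:
  fixes H :: "real^'n^'n"
  assumes symH: "\<And>i j. H$i$j = H$j$i"
  shows "sigma2 H = (1/2) * ((\<Sum>i\<in>UNIV. H$i$i)^2 - (\<Sum>i\<in>UNIV. \<Sum>j\<in>UNIV. (H$i$j)^2))"
proof -
  have "(\<Sum>i\<in>UNIV. \<Sum>j\<in>UNIV. H$i$i * H$j$j - H$i$j * H$j$i)
     = (\<Sum>i\<in>UNIV. \<Sum>j\<in>UNIV. H$i$i * H$j$j) - (\<Sum>i\<in>UNIV. \<Sum>j\<in>UNIV. (H$i$j)^2)"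
    using symH by (simp add: sum_subtractf power2_eq_square)
  also have "(\<Sum>i\<in>UNIV. \<Sum>j\<in>UNIV. H$i$i * H$j$j) = (\<Sum>i\<in>UNIV. H$i$i)^2"
    by (simp add: power2_eq_square sum_product)
  finally show ?thesis unfolding sigma2_def by simp
qed

lemma eig_facts:
  fixes H :: "real^'n^'n" and E :: "'n \<Rightarrow> 'n \<Rightarrow> real" and l :: "'n \<Rightarrow> real"
  assumes symH: "\<And>i j. H$i$j = H$j$i"
    and on: "\<And>a b. (\<Sum>i\<in>UNIV. E a i * E b i) = (if a = b then 1 else 0)"
    and comp: "\<And>i j. (\<Sum>a\<in>UNIV. E a i * E a j) = (if i = j then 1 else 0)"
    and hd: "\<And>i j. H$i$j = (\<Sum>a\<in>UNIV. l a * E a i * E a j)"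
    and sig: "sigma2 H > 0"
  shows "(\<Sum>i\<in>UNIV. H$i$i) = (\<Sum>a\<in>UNIV. l a)" "(\<Sum>a\<in>UNIV. (l a)^2) < (\<Sum>a\<in>UNIV. l a)^2"
proof -
  interpret eigsys E l "\<lambda>i j. H$i$j" "\<lambda>i j k. 0"
    by unfold_locales (use on comp hd in auto)
  show tr: "(\<Sum>i\<in>UNIV. H$i$i) = (\<Sum>a\<in>UNIV. l a)" using trace_h by simp
  have "(\<Sum>i\<in>UNIV. \<Sum>j\<in>UNIV. (H$i$j)^2) = (\<Sum>a\<in>UNIV. (l a)^2)" using sq_h by simp
  then show "(\<Sum>a\<in>UNIV. (l a)^2) < (\<Sum>a\<in>UNIV. l a)^2" using sig sigma2_sym[OF symH] tr by simp
qed

definition diagsys :: "real^'n^'n \<Rightarrow> ('n \<Rightarrow> 'n \<Rightarrow> real) \<Rightarrow> ('n \<Rightarrow> real) \<Rightarrow> bool" where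
  "diagsys H E l \<longleftrightarrow> (\<forall>a b. (\<Sum>i\<in>UNIV. E a i * E b i) = (if a = b then 1 else 0))
    \<and> (\<forall>i j. (\<Sum>a\<in>UNIV. E a i * E a j) = (if i = j then 1 else 0))
    \<and> (\<forall>i j. H$i$j = (\<Sum>a\<in>UNIV. l a * E a i * E a j))
    \<and> lambda_min H = Min (range l)"

lemma diag_ex:
  fixes H :: "real^'n^'n"
  assumes symH: "\<And>i j. H$i$j = H$j$i"
  shows "\<exists>E l. diagsys H E l"
proof (rule diag[OF symH])
  fix E :: "'n \<Rightarrow> 'n \<Rightarrow> real" and l :: "'n \<Rightarrow> real"
  assume a: "\<And>a b. (\<Sum>i\<in>UNIV. E a i * E b i) = (if a = b then 1 else 0)"
    "\<And>i j. (\<Sum>a\<in>UNIV. E a i * E a j) = (if i = j then 1 else 0)"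
    "\<And>i j. H$i$j = (\<Sum>a\<in>UNIV. l a * E a i * E a j)"
    "lambda_min H = Min (range l)"
  have "diagsys H E l" unfolding diagsys_def using a by simp
  then show "\<exists>E l. diagsys H E l" by blast
qed

lemma lmin_bounds:
  fixes H :: "real^'n^'n"
  assumes symH: "\<And>i j. H$i$j = H$j$i" and S: "S = (\<Sum>i\<in>UNIV. H$i$i)" "S > 0" and sig: "sigma2 H > 0"
  shows "lambda_min H \<le> S / real CARD('n)" "CARD('n) = 4 \<Longrightarrow> - S/2 < lambda_min H"
proof -
  obtain E :: "'n \<Rightarrow> 'n \<Rightarrow> real" and l where D: "diagsys H E l" using diag_ex[OF symH] by blast
  have on: "\<And>a b. (\<Sum>i\<in>UNIV. E a i * E b i) = (if a = b then 1 else 0)"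
    and comp: "\<And>i j. (\<Sum>a\<in>UNIV. E a i * E a j) = (if i = j then 1 else 0)"
    and hd: "\<And>i j. H$i$j = (\<Sum>a\<in>UNIV. l a * E a i * E a j)"
    and lm: "lambda_min H = Min (range l)"
    using D unfolding diagsys_def by simp_all
  note ef = eig_facts[OF symH on comp hd sig]
  define \<mu> where "\<mu> = Min (range l)"
  have muc: "\<mu> \<le> l c" for c unfolding \<mu>_def by (rule Min_le) auto
  have "(\<Sum>a\<in>(UNIV::'n set). \<mu>) \<le> (\<Sum>a\<in>UNIV. l a)" by (rule sum_mono) (rule muc)
  then have nm: "real CARD('n) * \<mu> \<le> S" using ef(1) S(1) by simp
  have cpos: "real CARD('n) > 0" by simp
  have "\<mu> \<le> S / real CARD('n)" using nm cpos by (simp add: pos_le_divide_eq mult.commute)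
  then show "lambda_min H \<le> S / real CARD('n)" unfolding lm \<mu>_def .
  assume n4: "CARD('n) = 4"
  obtain a0 where a0: "l a0 = \<mu>"
  proof -
    have "\<mu> \<in> range l" unfolding \<mu>_def by (rule Min_in) auto
    then show ?thesis using that by auto
  qed
  define I where "I = UNIV - {a0}"
  have cI: "card I = 3" unfolding I_def using n4 by (simp add: card_Diff_singleton)
  have r1: "(\<Sum>a\<in>UNIV. l a) = l a0 + (\<Sum>a\<in>I. l a)" unfolding I_def by (rule sum.remove) auto
  have r2: "(\<Sum>a\<in>UNIV. (l a)^2) = (l a0)^2 + (\<Sum>a\<in>I. (l a)^2)" unfolding I_def by (rule sum.remove) auto
  have sI: "(\<Sum>a\<in>I. l a) = S - \<mu>" using r1 ef(1) S(1) a0 by linarith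
  have sI2: "(\<Sum>a\<in>I. (l a)^2) = (\<Sum>a\<in>UNIV. (l a)^2) - \<mu>^2" using r2 a0 by simp
  have "(\<Sum>a\<in>I. l a * 1)^2 \<le> (\<Sum>a\<in>I. (l a)^2) * (\<Sum>a\<in>I. 1^2)" by (rule Cauchy_Schwarz_ineq_sum)
  then have "(S - \<mu>)^2 \<le> 3 * ((\<Sum>a\<in>UNIV. (l a)^2) - \<mu>^2)" using sI sI2 cI by simp
  also have "\<dots> < 3 * (S^2 - \<mu>^2)" using ef(2) ef(1) S(1) by simp
  finally have ineq: "(S - \<mu>)^2 < 3 * (S^2 - \<mu>^2)" .
  have "\<mu> < S" using nm n4 S(2) by simp
  then have pos: "S - \<mu> > 0" by simp
  have "(S - \<mu>) * (S - \<mu>) < (S - \<mu>) * (3 * (S + \<mu>))"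
    using ineq by (simp add: power2_eq_square algebra_simps)
  then have "S - \<mu> < 3 * (S + \<mu>)" using pos by simp
  then have "- S/2 < \<mu>" by simp
  then show "- S/2 < lambda_min H" unfolding lm \<mu>_def .
qed

lemma core:
  fixes H :: "real^'n^'n" and T :: "'n \<Rightarrow> 'n \<Rightarrow> 'n \<Rightarrow> real"
  assumes symH: "\<And>i j. H$i$j = H$j$i"
    and s1: "\<And>i j k. T i j k = T j i k" and s2: "\<And>i j k. T i j k = T i k j"
    and S: "S = (\<Sum>i\<in>UNIV. H$i$i)" "S > 0" and sig: "sigma2 H > 0"
    and con: "\<And>k. (\<Sum>i\<in>UNIV. \<Sum>j\<in>UNIV. (S * (if i = j then 1 else 0) - H$i$j) * T i j k) = 0"
    and e: "e \<ge> 0" and g0: "gh (real CARD('n)) S e 0 \<ge> 0"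
    and gm: "gh (real CARD('n)) S e (S - lambda_min H) \<ge> 0"
  shows "(\<Sum>i\<in>UNIV. \<Sum>j\<in>UNIV. \<Sum>k\<in>UNIV. (T i j k)^2) - (\<Sum>k\<in>UNIV. (\<Sum>i\<in>UNIV. T i i k)^2)
     \<ge> (1+e)/S * (\<Sum>i\<in>UNIV. \<Sum>j\<in>UNIV. (S * (if i = j then 1 else 0) - H$i$j) * (\<Sum>a\<in>UNIV. T a a i) * (\<Sum>a\<in>UNIV. T a a j))"
proof -
  obtain E :: "'n \<Rightarrow> 'n \<Rightarrow> real" and l where D: "diagsys H E l" using diag_ex[OF symH] by blast
  have on: "\<And>a b. (\<Sum>i\<in>UNIV. E a i * E b i) = (if a = b then 1 else 0)"
    and comp: "\<And>i j. (\<Sum>a\<in>UNIV. E a i * E a j) = (if i = j then 1 else 0)"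
    and hd: "\<And>i j. H$i$j = (\<Sum>a\<in>UNIV. l a * E a i * E a j)"
    and lm: "lambda_min H = Min (range l)"
    using D unfolding diagsys_def by simp_all
  note ef = eig_facts[OF symH on comp hd sig]
  interpret eigsys E l "\<lambda>i j. H$i$j" T
    by unfold_locales (use on comp hd s1 s2 in auto)
  define v where "v k = (\<Sum>i\<in>UNIV. T i i k)" for k
  have Sl: "S = (\<Sum>a\<in>UNIV. l a)" using ef(1) S(1) by simp
  have con': "(\<Sum>a\<in>UNIV. (S - l a) * Tp a a c) = 0" for c
    by (rule con_Tp) (use con in simp)
  have EI: "(\<Sum>a\<in>UNIV. \<Sum>b\<in>UNIV. \<Sum>c\<in>UNIV. (Tp a b c)^2) - (\<Sum>c\<in>UNIV. (\<Sum>a\<in>UNIV. Tp a a c)^2)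
     \<ge> (1+e)/S * (\<Sum>c\<in>UNIV. (S - l c) * (\<Sum>a\<in>UNIV. Tp a a c)^2)"
  proof (rule eigen_ineq[where l=l and \<mu>="Min (range l)" and n="real CARD('n)"])
    show "(\<Sum>a\<in>UNIV. l a^2) < S^2" using ef(2) Sl by simp
    show "gh (real CARD('n)) S e (S - Min (range l)) \<ge> 0" using gm lm by simp
  qed (use Sl S(2) e g0 Tp_s1 Tp_s2 con' in auto)
  have tr: "(\<Sum>a\<in>UNIV. Tp a a c) = (\<Sum>k\<in>UNIV. E c k * v k)" for c
    unfolding v_def by (rule trace_Tp)
  have "(\<Sum>c\<in>UNIV. (\<Sum>a\<in>UNIV. Tp a a c)^2) = (\<Sum>k\<in>UNIV. (v k)^2)"
    unfolding tr by (rule parseval[OF comp])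
  moreover have "(\<Sum>c\<in>UNIV. (S - l c) * (\<Sum>a\<in>UNIV. Tp a a c)^2)
     = (\<Sum>i\<in>UNIV. \<Sum>j\<in>UNIV. (S * (if i = j then 1 else 0) - H$i$j) * v i * v j)"
    unfolding tr by (rule quad_Tp)
  ultimately show ?thesis using EI Tp_sq unfolding v_def by simp
qed


lemma final_alg:
  fixes F :: "'n::finite \<Rightarrow> 'n \<Rightarrow> real" and X :: "'n \<Rightarrow> 'n \<Rightarrow> real" and v :: "'n \<Rightarrow> real"
  assumes S: "S > 0" and A: "(\<Sum>i\<in>UNIV. \<Sum>j\<in>UNIV. F i j * X i j) = A"
    and core: "A \<ge> (1+e)/S * (\<Sum>i\<in>UNIV. \<Sum>j\<in>UNIV. F i j * v i * v j)"
  shows "(\<Sum>i\<in>UNIV. \<Sum>j\<in>UNIV. F i j * ((X i j * S - v j * v i) / S^2))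
       \<ge> e * (\<Sum>i\<in>UNIV. \<Sum>j\<in>UNIV. F i j * (v i / S) * (v j / S))"
proof -
  define Q where "Q = (\<Sum>i\<in>UNIV. \<Sum>j\<in>UNIV. F i j * v i * v j)"
  have l: "(\<Sum>i\<in>UNIV. \<Sum>j\<in>UNIV. F i j * ((X i j * S - v j * v i) / S^2)) = (S * A - Q) / S^2"
  proof -
    have "(\<Sum>i\<in>UNIV. \<Sum>j\<in>UNIV. F i j * ((X i j * S - v j * v i) / S^2))
       = (\<Sum>i\<in>UNIV. \<Sum>j\<in>UNIV. (S * (F i j * X i j) - F i j * v i * v j) / S^2)"
      by (simp add: algebra_simps)
    also have "\<dots> = (S * (\<Sum>i\<in>UNIV. \<Sum>j\<in>UNIV. F i j * X i j) - Q) / S^2"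
      unfolding Q_def by (simp add: sum_divide_distrib[symmetric] sum_subtractf sum_distrib_left)
    finally show ?thesis using A by simp
  qed
  have r: "e * (\<Sum>i\<in>UNIV. \<Sum>j\<in>UNIV. F i j * (v i / S) * (v j / S)) = e * Q / S^2"
    unfolding Q_def by (simp add: sum_divide_distrib[symmetric] power2_eq_square algebra_simps)
  have "(1+e) * Q / S \<le> A" using core unfolding Q_def by simp
  then have "(1+e) * Q \<le> A * S" using S by (simp add: pos_divide_le_eq)
  then have "S * A \<ge> (1+e) * Q" by (simp add: mult.commute)
  then have "S * A - Q \<ge> e * Q" by (simp add: algebra_simps)
  then have "(S * A - Q) / S^2 \<ge> e * Q / S^2" using S by (simp add: divide_right_mono)
  then show ?thesis unfolding l r .
qed

theorem proposition2p1:
  fixes u :: "real^'n \<Rightarrow> real" and \<Omega> :: "(real^'n) set"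
  assumes "open \<Omega>" and "smooth_on \<Omega> u"
    and "\<forall>x\<in>\<Omega>. sigma2 (hessian u x) = 1"
    and "\<forall>x\<in>\<Omega>. laplacian u x > 0"
  defines "b \<equiv> (\<lambda>x. ln (laplacian u x))"
    and "F \<equiv> (\<lambda>x. laplacian u x *\<^sub>R (mat 1 :: real^'n^'n) - hessian u x)"
  shows "(CARD('n) = 4 \<longrightarrow>
            (\<forall>x\<in>\<Omega>. let \<epsilon> = 2/9 * (1/2 + lambda_min (hessian u x) / laplacian u x) in
               \<epsilon> > 0 \<and>
               (\<Sum>i\<in>UNIV. \<Sum>j\<in>UNIV. F x $ i $ j * pderiv i (pderiv j b) x)
                 \<ge> \<epsilon> * (\<Sum>i\<in>UNIV. \<Sum>j\<in>UNIV. F x $ i $ j * pderiv i b x * pderiv j b x)))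
       \<and> (CARD('n) \<ge> 5 \<longrightarrow>
            (\<forall>x\<in>\<Omega>. let n = real CARD('n); s = sqrt (3 * n^2 + 1) in
               lambda_min (hessian u x) / laplacian u x \<ge> - (s - (n - 1)) / (2 * n) \<longrightarrow>
               (let \<epsilon> = (s - (n + 1)) / (3 * (n - 1)) *
                          ((s - (n - 1)) / (2 * n) + lambda_min (hessian u x) / laplacian u x) in
               (\<Sum>i\<in>UNIV. \<Sum>j\<in>UNIV. F x $ i $ j * pderiv i (pderiv j b) x)
                 \<ge> \<epsilon> * (\<Sum>i\<in>UNIV. \<Sum>j\<in>UNIV. F x $ i $ j * pderiv i b x * pderiv j b x))))"
proof -
  note O = assms(1) and sm = assms(2) and eq = assms(3) and pos = assms(4)
  have key: "(\<Sum>i\<in>UNIV. \<Sum>j\<in>UNIV. F x $ i $ j * pderiv i (pderiv j b) x)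
                 \<ge> e * (\<Sum>i\<in>UNIV. \<Sum>j\<in>UNIV. F x $ i $ j * pderiv i b x * pderiv j b x)"
    if x: "x \<in> \<Omega>" and e: "e \<ge> 0" and g0: "gh (real CARD('n)) (laplacian u x) e 0 \<ge> 0"
      and gm: "gh (real CARD('n)) (laplacian u x) e (laplacian u x - lambda_min (hessian u x)) \<ge> 0" for x e
  proof -
    note df = deriv_facts[OF O sm x eq pos]
    define S where "S = laplacian u x"
    define H where "H = hessian u x"
    define T where "T i j k = iter_pderiv [k,i,j] u x" for i j k
    define v where "v k = (\<Sum>a\<in>UNIV. T a a k)" for k
    define X where "X i j = (\<Sum>a\<in>UNIV. iter_pderiv [a,a,i,j] u x)" for i j
    define Fm where "Fm i j = S * (if i = j then 1 else 0) - H$i$j" for i j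
    have Spos: "S > 0" using pos x unfolding S_def by simp
    have FF: "F x $ i $ j = Fm i j" for i j unfolding F_def Fm_def S_def H_def by (simp add: mat_def)
    have db: "pderiv i b x = v i / S" for i unfolding b_def v_def T_def S_def using df(7) by simp
    have d2b: "pderiv i (pderiv j b) x = (X i j * S - v j * v i) / S^2" for i j
      unfolding b_def v_def T_def S_def X_def using df(8) by simp
    have A: "(\<Sum>i\<in>UNIV. \<Sum>j\<in>UNIV. Fm i j * X i j)
        = (\<Sum>i\<in>UNIV. \<Sum>j\<in>UNIV. \<Sum>k\<in>UNIV. (T i j k)^2) - (\<Sum>k\<in>UNIV. (\<Sum>i\<in>UNIV. T i i k)^2)"
    proof -
      have "(\<Sum>i\<in>UNIV. \<Sum>j\<in>UNIV. Fm i j * X i j) = (\<Sum>i\<in>UNIV. \<Sum>j\<in>UNIV. \<Sum>a\<in>UNIV. Fm i j * iter_pderiv [a,a,i,j] u x)"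
        unfolding X_def by (simp add: sum_distrib_left)
      also have "\<dots> = (\<Sum>a\<in>UNIV. \<Sum>i\<in>UNIV. \<Sum>j\<in>UNIV. Fm i j * iter_pderiv [a,a,i,j] u x)"
        by (rule pull_out3)
      also have "\<dots> = (\<Sum>a\<in>UNIV. (\<Sum>i\<in>UNIV. \<Sum>j\<in>UNIV. (T i j a)^2) - (\<Sum>i\<in>UNIV. T i i a)^2)"
        unfolding Fm_def S_def H_def T_def using df(5) by simp
      also have "\<dots> = (\<Sum>a\<in>UNIV. \<Sum>i\<in>UNIV. \<Sum>j\<in>UNIV. (T i j a)^2) - (\<Sum>k\<in>UNIV. (\<Sum>i\<in>UNIV. T i i k)^2)"
        by (simp add: sum_subtractf)
      also have "(\<Sum>a\<in>UNIV. \<Sum>i\<in>UNIV. \<Sum>j\<in>UNIV. (T i j a)^2) = (\<Sum>i\<in>UNIV. \<Sum>j\<in>UNIV. \<Sum>k\<in>UNIV. (T i j k)^2)"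
        by (rule pull_out3[symmetric])
      finally show ?thesis .
    qed
    have symH: "\<And>i j. H$i$j = H$j$i" unfolding H_def using df(1) by simp
    have s1: "\<And>i j k. T i j k = T j i k" unfolding T_def using df(2) by simp
    have s2: "\<And>i j k. T i j k = T i k j" unfolding T_def using df(3) by simp
    have con: "\<And>k. (\<Sum>i\<in>UNIV. \<Sum>j\<in>UNIV. (S * (if i = j then 1 else 0) - H$i$j) * T i j k) = 0"
      unfolding S_def H_def T_def using df(4) by simp
    have tr: "S = (\<Sum>i\<in>UNIV. H$i$i)" unfolding S_def H_def using df(6) .
    have sig: "sigma2 H > 0" unfolding H_def using eq x by simp
    have C: "(\<Sum>i\<in>UNIV. \<Sum>j\<in>UNIV. \<Sum>k\<in>UNIV. (T i j k)^2) - (\<Sum>k\<in>UNIV. (\<Sum>i\<in>UNIV. T i i k)^2)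
     \<ge> (1+e)/S * (\<Sum>i\<in>UNIV. \<Sum>j\<in>UNIV. (S * (if i = j then 1 else 0) - H$i$j) * (\<Sum>a\<in>UNIV. T a a i) * (\<Sum>a\<in>UNIV. T a a j))"
      by (rule core[OF symH s1 s2 tr Spos sig con e]) (use g0 gm in \<open>simp_all add: S_def H_def\<close>)
    have "(\<Sum>i\<in>UNIV. \<Sum>j\<in>UNIV. Fm i j * ((X i j * S - v j * v i) / S^2))
       \<ge> e * (\<Sum>i\<in>UNIV. \<Sum>j\<in>UNIV. Fm i j * (v i / S) * (v j / S))"
      by (rule final_alg[OF Spos A]) (use C in \<open>simp add: Fm_def v_def\<close>)
    then show ?thesis by (simp add: FF db d2b)
  qed
  show ?thesis
  proof (intro conjI impI ballI)
    fix x assume n4: "CARD('n) = 4" and x: "x \<in> \<Omega>"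
    define S where "S = laplacian u x"
    define \<mu> where "\<mu> = lambda_min (hessian u x)"
    define e where "e = 2/9 * (1/2 + \<mu>/S)"
    have Spos: "S > 0" using pos x unfolding S_def by simp
    have symH: "\<And>i j. hessian u x $ i $ j = hessian u x $ j $ i" using deriv_facts(1)[OF O sm x eq pos] .
    have tr: "S = (\<Sum>i\<in>UNIV. hessian u x $ i $ i)" unfolding S_def using deriv_facts(6)[OF O sm x eq pos] .
    have sig: "sigma2 (hessian u x) > 0" using eq x by simp
    note lb = lmin_bounds[OF symH tr Spos sig]
    have m2: "\<mu> \<le> S/4" using lb(1) n4 unfolding \<mu>_def by simp
    have m1: "-S/2 < \<mu>" using lb(2)[OF n4] unfolding \<mu>_def .
    note g = gh_n4[OF Spos m1 m2 e_def]
    have "(\<Sum>i\<in>UNIV. \<Sum>j\<in>UNIV. F x $ i $ j * pderiv i (pderiv j b) x)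
                 \<ge> e * (\<Sum>i\<in>UNIV. \<Sum>j\<in>UNIV. F x $ i $ j * pderiv i b x * pderiv j b x)"
      by (rule key[OF x]) (use g n4 in \<open>simp_all add: S_def \<mu>_def less_imp_le\<close>)
    then show "let \<epsilon> = 2/9 * (1/2 + lambda_min (hessian u x) / laplacian u x) in
               \<epsilon> > 0 \<and>
               (\<Sum>i\<in>UNIV. \<Sum>j\<in>UNIV. F x $ i $ j * pderiv i (pderiv j b) x)
                 \<ge> \<epsilon> * (\<Sum>i\<in>UNIV. \<Sum>j\<in>UNIV. F x $ i $ j * pderiv i b x * pderiv j b x)"
      using g(1) unfolding Let_def e_def S_def \<mu>_def by simp
  next
    fix x assume n5: "CARD('n) \<ge> 5" and x: "x \<in> \<Omega>"
    define S where "S = laplacian u x"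
    define \<mu> where "\<mu> = lambda_min (hessian u x)"
    define n where "n = real CARD('n)"
    define s where "s = sqrt (3 * n^2 + 1)"
    define e where "e = (s - (n + 1)) / (3 * (n - 1)) * ((s - (n - 1)) / (2 * n) + \<mu> / S)"
    have Spos: "S > 0" using pos x unfolding S_def by simp
    have symH: "\<And>i j. hessian u x $ i $ j = hessian u x $ j $ i" using deriv_facts(1)[OF O sm x eq pos] .
    have tr: "S = (\<Sum>i\<in>UNIV. hessian u x $ i $ i)" unfolding S_def using deriv_facts(6)[OF O sm x eq pos] .
    have sig: "sigma2 (hessian u x) > 0" using eq x by simp
    note lb = lmin_bounds[OF symH tr Spos sig]
    have m2: "\<mu> \<le> S/n" using lb(1) unfolding \<mu>_def n_def by simp
    have nn: "n \<ge> 5" using n5 unfolding n_def by simp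
    show "let n = real CARD('n); s = sqrt (3 * n^2 + 1) in
               lambda_min (hessian u x) / laplacian u x \<ge> - (s - (n - 1)) / (2 * n) \<longrightarrow>
               (let \<epsilon> = (s - (n + 1)) / (3 * (n - 1)) *
                          ((s - (n - 1)) / (2 * n) + lambda_min (hessian u x) / laplacian u x) in
               (\<Sum>i\<in>UNIV. \<Sum>j\<in>UNIV. F x $ i $ j * pderiv i (pderiv j b) x)
                 \<ge> \<epsilon> * (\<Sum>i\<in>UNIV. \<Sum>j\<in>UNIV. F x $ i $ j * pderiv i b x * pderiv j b x))"
      unfolding Let_def n_def[symmetric] s_def[symmetric] S_def[symmetric] \<mu>_def[symmetric] e_def[symmetric]
    proof
      assume m1: "\<mu> / S \<ge> - (s - (n - 1)) / (2 * n)"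
      note g = gh_n5[OF nn s_def Spos m1 m2 e_def]
      show "(\<Sum>i\<in>UNIV. \<Sum>j\<in>UNIV. F x $ i $ j * pderiv i (pderiv j b) x)
                 \<ge> e * (\<Sum>i\<in>UNIV. \<Sum>j\<in>UNIV. F x $ i $ j * pderiv i b x * pderiv j b x)"
        by (rule key[OF x]) (use g in \<open>simp_all add: S_def \<mu>_def n_def\<close>)
    qed
  qed
qed


end
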